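(* For each $f\in\Bbbk[x]$ and $\lambda\in\Bbbk^\times$ there is a unique algebra automorphism $\phi_{f,\lambda}:A\to A$ with $\phi_{f,\lambda}(x)=\lambda x$ and $\phi_{f,\lambda}(y)=\lambda^{N-1}y+f$. Moreover, the map $(f,\lambda)\mapsto\phi_{f,\lambda}$ is an isomorphism of groups from $\Bbbk[x]\bowtie\Bbbk^\times$ onto the automorphism group $\mathrm{Aut}(A)$ (with composition as product).
   Context: Let $\Bbbk$ be a field of characteristic zero and $N\geq1$ an integer. Let $A=A_N$ be the $\Bbbk$-algebra generated by $x,y$ subject to the relation $yx-xy=x^N$. For $g\in\Bbbk[x]$ and $\lambda\in\Bbbk^\times$ write $g\cdot\lambda$ for the polynomial $g(\lambda x)$. The group $\Bbbk[x]\bowtie\Bbbk^\times$ has underlying set $\Bbbk[x]\times\Bbbk^\times$ and product $(f,\lambda)\cdot(g,\mu)=(\mu^{N-1}f+g\cdot\lambda,\ \lambda\mu)$. *)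

theory Defs
  imports "HOL-Library.Poly_Mapping" "HOL-Computational_Algebra.Polynomial" "HOL-Algebra.Bij"
begin

text \<open>Words in the two letters x (encoded False) and y (encoded True); concatenation is the
monoid operation. The free associative algebra k<x,y> is the monoid algebra of words,
realised as finitely supported functions from words to k with convolution product.\<close>

datatype word = W "bool list"

instantiation word :: monoid_add
begin
definition zero_word :: word where "zero_word = W []"
fun plus_word :: "word \<Rightarrow> word \<Rightarrow> word" where "plus_word (W u) (W v) = W (u @ v)"
instance
proof
  fix a b c :: word
  show "a + b + c = a + (b + c)" by (cases a; cases b; cases c) simp
  show "0 + a = a" by (cases a) (simp add: zero_word_def)
  show "a + 0 = a" by (cases a) (simp add: zero_word_def)
qed
end

type_synonym 'k free_alg = "word \<Rightarrow>\<^sub>0 'k"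

definition fx :: "'k::comm_ring_1 free_alg" where "fx = Poly_Mapping.single (W [False]) 1"
definition fy :: "'k::comm_ring_1 free_alg" where "fy = Poly_Mapping.single (W [True]) 1"

definition fscal :: "'k::comm_ring_1 \<Rightarrow> 'k free_alg" where
  "fscal c = Poly_Mapping.single (W []) c"

definition fpoly :: "'k::comm_ring_1 poly \<Rightarrow> 'k free_alg" where
  "fpoly g = (\<Sum>i\<le>degree g. fscal (coeff g i) * fx ^ i)"

definition relator :: "nat \<Rightarrow> 'k::comm_ring_1 free_alg" where
  "relator N = fy * fx - fx * fy - fx ^ N"

inductive_set rel_ideal :: "nat \<Rightarrow> 'k::comm_ring_1 free_alg set" for N where
  gen: "a * relator N * b \<in> rel_ideal N"
| zero: "0 \<in> rel_ideal N"
| add: "p \<in> rel_ideal N \<Longrightarrow> q \<in> rel_ideal N \<Longrightarrow> p + q \<in> rel_ideal N"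

definition cls :: "nat \<Rightarrow> 'k::comm_ring_1 free_alg \<Rightarrow> 'k free_alg set" where
  "cls N p = {q. q - p \<in> rel_ideal N}"

definition A :: "nat \<Rightarrow> 'k::comm_ring_1 free_alg set set" where
  "A N = range (cls N)"

definition rep :: "'k::comm_ring_1 free_alg set \<Rightarrow> 'k free_alg" where
  "rep P = (SOME p. p \<in> P)"

definition A_add :: "nat \<Rightarrow> 'k::comm_ring_1 free_alg set \<Rightarrow> 'k free_alg set \<Rightarrow> 'k free_alg set" where
  "A_add N P Q = cls N (rep P + rep Q)"
definition A_mult :: "nat \<Rightarrow> 'k::comm_ring_1 free_alg set \<Rightarrow> 'k free_alg set \<Rightarrow> 'k free_alg set" where
  "A_mult N P Q = cls N (rep P * rep Q)"
definition A_scale :: "nat \<Rightarrow> 'k::comm_ring_1 \<Rightarrow> 'k free_alg set \<Rightarrow> 'k free_alg set" where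
  "A_scale N c P = cls N (fscal c * rep P)"
definition A_one :: "nat \<Rightarrow> 'k::comm_ring_1 free_alg set" where
  "A_one N = cls N 1"
definition A_x :: "nat \<Rightarrow> 'k::comm_ring_1 free_alg set" where
  "A_x N = cls N fx"
definition A_y :: "nat \<Rightarrow> 'k::comm_ring_1 free_alg set" where
  "A_y N = cls N fy"
definition A_poly :: "nat \<Rightarrow> 'k::comm_ring_1 poly \<Rightarrow> 'k free_alg set" where
  "A_poly N g = cls N (fpoly g)"

text \<open>A k-algebra automorphism of A_N: a bijection of A_N onto itself (extensional, i.e.
undefined outside A_N, so that it is a genuine element of the group) which is additive,
multiplicative, k-linear and unital.\<close>
definition is_alg_aut :: "nat \<Rightarrow> ('k::comm_ring_1 free_alg set \<Rightarrow> 'k free_alg set) \<Rightarrow> bool" where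
  "is_alg_aut N \<phi> \<longleftrightarrow> \<phi> \<in> Bij (A N)
     \<and> (\<forall>P\<in>A N. \<forall>Q\<in>A N. \<phi> (A_add N P Q) = A_add N (\<phi> P) (\<phi> Q))
     \<and> (\<forall>P\<in>A N. \<forall>Q\<in>A N. \<phi> (A_mult N P Q) = A_mult N (\<phi> P) (\<phi> Q))
     \<and> (\<forall>c. \<forall>P\<in>A N. \<phi> (A_scale N c P) = A_scale N c (\<phi> P))
     \<and> \<phi> (A_one N) = A_one N"

definition Aut_group :: "nat \<Rightarrow> ('k::comm_ring_1 free_alg set \<Rightarrow> 'k free_alg set) monoid" where
  "Aut_group N = BijGroup (A N) \<lparr>carrier := {\<phi>. is_alg_aut N \<phi>}\<rparr>"

definition is_phi :: "nat \<Rightarrow> 'k::comm_ring_1 poly \<Rightarrow> 'k \<Rightarrow> ('k free_alg set \<Rightarrow> 'k free_alg set) \<Rightarrow> bool" where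
  "is_phi N f l \<phi> \<longleftrightarrow> is_alg_aut N \<phi>
     \<and> \<phi> (A_x N) = A_scale N l (A_x N)
     \<and> \<phi> (A_y N) = A_add N (A_scale N (l ^ (N - 1)) (A_y N)) (A_poly N f)"

definition phi :: "nat \<Rightarrow> 'k::comm_ring_1 poly \<Rightarrow> 'k \<Rightarrow> ('k free_alg set \<Rightarrow> 'k free_alg set)" where
  "phi N f l = (THE \<phi>. is_phi N f l \<phi>)"

definition bowtie :: "nat \<Rightarrow> ('k::field poly \<times> 'k) monoid" where
  "bowtie N = \<lparr>carrier = {(f, l). l \<noteq> 0},
     mult = (\<lambda>(f, l) (g, m). (smult (m ^ (N - 1)) f + pcompose g [:0, l:], l * m)),
     one = (0, 1)\<rparr>"

end

theory Submission
  imports Defs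
begin

lemma pm_induct[case_names zero single]:
  fixes P :: "('a \<Rightarrow>\<^sub>0 'b::monoid_add) \<Rightarrow> bool"
  assumes "P 0" "\<And>w c p. P p \<Longrightarrow> P (Poly_Mapping.single w c + p)"
  shows "P p"
proof (induction p rule: update_induct)
  case const then show ?case using assms(1) .
next
  case (update f a b)
  have "Poly_Mapping.update a b f = Poly_Mapping.single a b + f"
    using update(1) by (intro poly_mapping_eqI) (auto simp: lookup_update lookup_add lookup_single in_keys_iff when_def)
  then show ?case using assms(2) update by simp
qed

lemma word_zero: "W [] = 0" by (simp add: zero_word_def)
lemma word_cons: "W (b # bs) = W [b] + W bs" by simp

lemma fscal_single: "fscal c = Poly_Mapping.single 0 c"
  by (simp add: fscal_def word_zero)

lemma fscal_mult: "fscal a * fscal b = fscal (a * b)"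
  by (simp add: fscal_single mult_single)
lemma fscal_add: "fscal a + fscal b = fscal (a + b)"
  by (simp add: fscal_single single_add)
lemma fscal_0[simp]: "fscal 0 = 0"
  by (simp add: fscal_single)
lemma fscal_1[simp]: "fscal 1 = 1"
  by (simp add: fscal_single one_poly_mapping.abs_eq single.abs_eq)
lemma fscal_minus: "fscal (- a) = - fscal a"
  by (simp add: fscal_single single_uminus)
lemma fscal_diff: "fscal (a - b) = fscal a - fscal b"
  by (simp add: fscal_single single_diff)

lemma fscal_comm: "fscal c * p = p * fscal c"
proof (induction p rule: pm_induct)
  case zero then show ?case by simp
next
  case (single w d p)
  then show ?case by (simp add: distrib_left distrib_right fscal_single mult_single mult.commute)
qed

lemma fscal_mult_single: "fscal c * Poly_Mapping.single w d = Poly_Mapping.single w (c * d)"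
  by (simp add: fscal_single mult_single)

lemma single_scal: "Poly_Mapping.single w c = fscal c * Poly_Mapping.single w 1"
  by (simp add: fscal_mult_single)

lemma fscal_power: "fscal c ^ n = fscal (c ^ n)"
  by (induction n) (simp_all add: fscal_mult)

lemma fscal_pow_mult: "(fscal c * p) ^ n = fscal (c ^ n) * p ^ n"
proof (induction n)
  case 0 then show ?case by simp
next
  case (Suc n)
  have "(fscal c * p) ^ Suc n = fscal c * p * (fscal (c ^ n) * p ^ n)" by (simp add: Suc)
  also have "\<dots> = (fscal c * fscal (c ^ n)) * (p * p ^ n)"
    by (metis fscal_comm mult.assoc)
  finally show ?case by (simp add: fscal_mult)
qed

definition letter :: "bool \<Rightarrow> 'k::comm_ring_1 free_alg" where
  "letter b = (if b then fy else fx)"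

lemma single_word_cons: "Poly_Mapping.single (W (b # bs)) (1::'k::comm_ring_1) = letter b * Poly_Mapping.single (W bs) 1"
  by (simp add: letter_def fx_def fy_def mult_single)

section \<open>The relation ideal\<close>

lemma I_neg: "p \<in> rel_ideal N \<Longrightarrow> - p \<in> rel_ideal N"
proof (induction rule: rel_ideal.induct)
  case (gen a b)
  have "- (a * relator N * b) = (- a) * relator N * b" by simp
  then show ?case by (metis rel_ideal.gen)
next
  case zero then show ?case by (simp add: rel_ideal.zero)
next
  case (add p q)
  have "- (p + q) = (- p) + (- q)" by simp
  then show ?case using rel_ideal.add[OF add.IH] by metis
qed

lemma I_diff: "p \<in> rel_ideal N \<Longrightarrow> q \<in> rel_ideal N \<Longrightarrow> p - q \<in> rel_ideal N"
  using I_neg rel_ideal.add by (metis diff_conv_add_uminus)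

lemma I_lmult: "p \<in> rel_ideal N \<Longrightarrow> c * p \<in> rel_ideal N"
proof (induction rule: rel_ideal.induct)
  case (gen a b)
  have "c * (a * relator N * b) = (c * a) * relator N * b" by (simp add: mult.assoc)
  then show ?case by (metis rel_ideal.gen)
next
  case zero then show ?case by (simp add: rel_ideal.zero)
next
  case (add p q) then show ?case by (simp add: rel_ideal.add distrib_left)
qed

lemma I_rmult: "p \<in> rel_ideal N \<Longrightarrow> p * c \<in> rel_ideal N"
proof (induction rule: rel_ideal.induct)
  case (gen a b)
  have "(a * relator N * b) * c = a * relator N * (b * c)" by (simp add: mult.assoc)
  then show ?case by (metis rel_ideal.gen)
next
  case zero then show ?case by (simp add: rel_ideal.zero)
next
  case (add p q) then show ?case by (simp add: rel_ideal.add distrib_right)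
qed

lemma I_relator: "relator N \<in> rel_ideal N"
  using rel_ideal.gen[of 1 N 1] by simp

lemma I_sum: "finite S \<Longrightarrow> (\<And>i. i \<in> S \<Longrightarrow> f i \<in> rel_ideal N) \<Longrightarrow> (\<Sum>i\<in>S. f i) \<in> rel_ideal N"
  by (induction S rule: finite_induct) (auto intro: rel_ideal.zero rel_ideal.add)

definition eqv :: "nat \<Rightarrow> 'k::comm_ring_1 free_alg \<Rightarrow> 'k free_alg \<Rightarrow> bool" where
  "eqv N p q \<longleftrightarrow> p - q \<in> rel_ideal N"

lemma eqv_refl[simp]: "eqv N p p"
  by (simp add: eqv_def rel_ideal.zero)
lemma eqv_sym: "eqv N p q \<Longrightarrow> eqv N q p"
  unfolding eqv_def by (metis I_neg minus_diff_eq)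
lemma eqv_trans: "eqv N p q \<Longrightarrow> eqv N q r \<Longrightarrow> eqv N p r"
proof -
  assume a: "eqv N p q" "eqv N q r"
  have "p - r = (p - q) + (q - r)" by simp
  then show ?thesis using a unfolding eqv_def by (metis rel_ideal.add)
qed
lemma eqv_add: "eqv N p q \<Longrightarrow> eqv N p' q' \<Longrightarrow> eqv N (p + p') (q + q')"
proof -
  assume a: "eqv N p q" "eqv N p' q'"
  have "p + p' - (q + q') = (p - q) + (p' - q')" by simp
  then show ?thesis using a unfolding eqv_def by (metis rel_ideal.add)
qed
lemma eqv_diff: "eqv N p q \<Longrightarrow> eqv N p' q' \<Longrightarrow> eqv N (p - p') (q - q')"
proof -
  assume a: "eqv N p q" "eqv N p' q'"
  have "p - p' - (q - q') = (p - q) - (p' - q')" by (simp add: algebra_simps)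
  then show ?thesis using a unfolding eqv_def by (metis I_diff)
qed
lemma eqv_mult: "eqv N p q \<Longrightarrow> eqv N p' q' \<Longrightarrow> eqv N (p * p') (q * q')"
proof -
  assume a: "eqv N p q" "eqv N p' q'"
  have "p * p' - q * q' = (p - q) * p' + q * (p' - q')" by (simp add: algebra_simps)
  then show ?thesis using a unfolding eqv_def by (metis I_lmult I_rmult rel_ideal.add)
qed
lemma eqv_sum: "finite S \<Longrightarrow> (\<And>i. i \<in> S \<Longrightarrow> eqv N (f i) (g i)) \<Longrightarrow> eqv N (\<Sum>i\<in>S. f i) (\<Sum>i\<in>S. g i)"
  by (induction S rule: finite_induct) (auto intro: eqv_add)

lemma eqv_relator: "eqv N (fy * fx) (fx * fy + fx ^ N)"
  using I_relator[of N] unfolding eqv_def relator_def by (simp add: algebra_simps)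

lemma cls_eq_iff: "cls N p = cls N q \<longleftrightarrow> eqv N p q"
proof
  assume "cls N p = cls N q"
  moreover have "p \<in> cls N p" by (simp add: cls_def rel_ideal.zero)
  ultimately have "p \<in> cls N q" by simp
  then show "eqv N p q" by (simp add: cls_def eqv_def)
next
  assume "eqv N p q"
  then show "cls N p = cls N q" unfolding cls_def
    by (auto intro: eqv_trans eqv_sym simp: eqv_def[symmetric])
qed

lemma rep_cls: "eqv N (rep (cls N p)) p"
proof -
  have "p \<in> cls N p" by (simp add: cls_def rel_ideal.zero)
  then have "rep (cls N p) \<in> cls N p" unfolding rep_def by (rule someI)
  then show ?thesis by (simp add: cls_def eqv_def)
qed

lemma A_add_cls: "A_add N (cls N p) (cls N q) = cls N (p + q)"
  unfolding A_add_def cls_eq_iff by (intro eqv_add rep_cls)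
lemma A_mult_cls: "A_mult N (cls N p) (cls N q) = cls N (p * q)"
  unfolding A_mult_def cls_eq_iff by (intro eqv_mult rep_cls)
lemma A_scale_cls: "A_scale N c (cls N p) = cls N (fscal c * p)"
  unfolding A_scale_def cls_eq_iff by (intro eqv_mult rep_cls eqv_refl)

lemma in_A: "P \<in> A N \<longleftrightarrow> (\<exists>p. P = cls N p)"
  by (auto simp: A_def)


definition lin :: "('k::comm_ring_1 \<Rightarrow> 'b \<Rightarrow> 'b) \<Rightarrow> (word \<Rightarrow> 'b) \<Rightarrow> 'k free_alg \<Rightarrow> 'b::comm_monoid_add" where
  "lin sc g p = (\<Sum>w\<in>Poly_Mapping.keys p. sc (Poly_Mapping.lookup p w) (g w))"

lemma lin_superset:
  assumes "finite S" "Poly_Mapping.keys p \<subseteq> S" "\<And>b. sc 0 b = 0"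
  shows "lin sc g p = (\<Sum>w\<in>S. sc (Poly_Mapping.lookup p w) (g w))"
  unfolding lin_def using assms
  by (intro sum.mono_neutral_left) (auto simp: in_keys_iff)

lemma lin_add:
  assumes "\<And>b. sc 0 b = 0" "\<And>a c b. sc (a + c) b = sc a b + sc c b"
  shows "lin sc g (p + q) = lin sc g p + lin sc g q"
proof -
  let ?S = "Poly_Mapping.keys p \<union> Poly_Mapping.keys q"
  have "lin sc g (p + q) = (\<Sum>w\<in>?S. sc (Poly_Mapping.lookup (p + q) w) (g w))"
    using keys_add[of p q] by (intro lin_superset assms) auto
  also have "\<dots> = (\<Sum>w\<in>?S. sc (Poly_Mapping.lookup p w) (g w)) + (\<Sum>w\<in>?S. sc (Poly_Mapping.lookup q w) (g w))"
    by (simp add: lookup_add assms sum.distrib)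
  also have "\<dots> = lin sc g p + lin sc g q"
    by (subst (1 2) lin_superset[where S="?S"]) (auto simp: assms)
  finally show ?thesis .
qed

lemma lin_single:
  assumes "\<And>b. sc 0 b = 0"
  shows "lin sc g (Poly_Mapping.single w c) = sc c (g w)"
  unfolding lin_def using assms by auto

lemma lin_zero[simp]: "lin sc g 0 = 0"
  by (simp add: lin_def)

section \<open>Operators on k[x][y]\<close>

definition dlt :: "nat \<Rightarrow> 'k::field_char_0 poly \<Rightarrow> 'k poly" where
  "dlt N p = [:0,1:] ^ N * pderiv p"

definition Lx :: "'k::field_char_0 poly poly \<Rightarrow> 'k poly poly" where
  "Lx R = smult [:0,1:] R"

definition Ly :: "nat \<Rightarrow> 'k::field_char_0 poly poly \<Rightarrow> 'k poly poly" where
  "Ly N R = pCons 0 R + map_poly (dlt N) R"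

fun Lw :: "nat \<Rightarrow> word \<Rightarrow> 'k::field_char_0 poly poly \<Rightarrow> 'k poly poly" where
  "Lw N (W bs) R = foldr (\<lambda>b R. if b then Ly N R else Lx R) bs R"

definition nf :: "nat \<Rightarrow> 'k::field_char_0 free_alg \<Rightarrow> 'k poly poly" where
  "nf N p = lin (\<lambda>c R. smult [:c:] R) (\<lambda>w. Lw N w 1) p"

lemma dlt_0[simp]: "dlt N 0 = 0" by (simp add: dlt_def)
lemma dlt_add: "dlt N (a + b) = dlt N a + dlt N b" by (simp add: dlt_def pderiv_add algebra_simps)
lemma dlt_smult: "dlt N (smult c a) = smult c (dlt N a)" by (simp add: dlt_def pderiv_smult)
lemma dlt_const[simp]: "dlt N [:c:] = 0" by (simp add: dlt_def pderiv_pCons)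
lemma dlt_1[simp]: "dlt N 1 = 0" by (simp add: dlt_def)
lemma dlt_pCons: "dlt N (pCons b a) = [:0,1:] ^ N * a + [:0,1:] * dlt N a"
  by (simp add: dlt_def pderiv_pCons algebra_simps)

lemma coeff_Ly: "coeff (Ly N R) k = (if k = 0 then 0 else coeff R (k - 1)) + dlt N (coeff R k)"
  by (simp add: Ly_def coeff_map_poly coeff_pCons')

lemma Ly_add: "Ly N (R + S) = Ly N R + Ly N S"
  by (rule poly_eqI) (simp add: coeff_Ly dlt_add)
lemma Ly_0[simp]: "Ly N 0 = 0"
  by (rule poly_eqI) (simp add: coeff_Ly)
lemma Ly_smult: "Ly N (smult [:c:] R) = smult [:c:] (Ly N R)"
  by (rule poly_eqI) (simp add: coeff_Ly dlt_smult algebra_simps)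
lemma Lx_add: "Lx (R + S) = Lx R + Lx S" by (simp add: Lx_def smult_add_right)
lemma Lx_0[simp]: "Lx 0 = 0" by (simp add: Lx_def)
lemma Lx_smult: "Lx (smult [:c:] R) = smult [:c:] (Lx R)" by (simp add: Lx_def mult.commute)

lemma Lw_add: "Lw N w (R + S) = Lw N w R + Lw N w S"
proof (cases w)
  case (W bs) show ?thesis unfolding W Lw.simps by (induction bs) (auto simp: Ly_add Lx_add)
qed
lemma Lw_0[simp]: "Lw N w 0 = 0"
proof (cases w)
  case (W bs) show ?thesis unfolding W Lw.simps by (induction bs) auto
qed
lemma Lw_smult: "Lw N w (smult [:c:] R) = smult [:c:] (Lw N w R)"
proof (cases w)
  case (W bs) show ?thesis unfolding W Lw.simps by (induction bs) (auto simp: Ly_smult Lx_smult)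
qed

lemma smult_const_add: "smult [:a + c:] b = smult [:a:] b + smult [:c:] (b :: 'k::comm_ring_1 poly poly)"
  by (simp add: smult_add_left[symmetric])
lemma smult_const_one[simp]: "smult [:1:] p = (p :: 'k::comm_ring_1 poly poly)"
  by (rule poly_eqI) (simp add: smult_1_left)
lemma one_single: "(1::'k::comm_ring_1 free_alg) = Poly_Mapping.single (W []) 1"
  by (simp add: word_zero single_one)
lemma Lw_append: "Lw N (w + v) R = Lw N w (Lw N v R)"
  by (cases w; cases v) simp

lemma nf_single: "nf N (Poly_Mapping.single w c) = smult [:c:] (Lw N w 1)"
  unfolding nf_def by (rule lin_single) simp
lemma nf_add: "nf N (p + q) = nf N p + nf N q"
  unfolding nf_def by (rule lin_add) (auto simp: smult_const_add)
lemma nf_0[simp]: "nf N 0 = 0"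
  by (simp add: nf_def)
lemma nf_uminus: "nf N (- p) = - nf N p"
  using nf_add[of N p "- p"] by (simp add: eq_neg_iff_add_eq_0 add.commute)
lemma nf_diff: "nf N (p - q) = nf N p - nf N q"
  using nf_add[of N p "- q"] by (simp add: nf_uminus)
lemma nf_sum: "nf N (\<Sum>i\<in>S. f i) = (\<Sum>i\<in>S. nf N (f i))"
  by (induction S rule: infinite_finite_induct) (auto simp: nf_add)

lemma nf_single_mult: "nf N (Poly_Mapping.single w c * r) = smult [:c:] (Lw N w (nf N r))"
proof (induction r rule: pm_induct)
  case zero then show ?case by simp
next
  case (single v d r)
  have "nf N (Poly_Mapping.single w c * (Poly_Mapping.single v d + r))
      = nf N (Poly_Mapping.single (w + v) (c * d)) + nf N (Poly_Mapping.single w c * r)"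
    by (simp add: distrib_left mult_single nf_add)
  also have "\<dots> = smult [:c:] (Lw N w (nf N (Poly_Mapping.single v d + r)))"
    by (simp add: single.IH nf_single nf_add Lw_add Lw_smult Lw_append smult_add_right mult.commute[of d c])
  finally show ?case .
qed

lemma nf_fx_mult: "nf N (fx * r) = Lx (nf N r)"
  using nf_single_mult[of N "W [False]" 1 r] by (simp add: fx_def)
lemma nf_fy_mult: "nf N (fy * r) = Ly N (nf N r)"
  using nf_single_mult[of N "W [True]" 1 r] by (simp add: fy_def)
lemma nf_fscal_mult: "nf N (fscal c * r) = smult [:c:] (nf N r)"
  using nf_single_mult[of N "W []" c r] by (simp add: fscal_def)
lemma nf_1[simp]: "nf N 1 = 1"
  by (simp only: one_single nf_single) (simp add: one_pCons)
lemma nf_fscal: "nf N (fscal c) = [:[:c:]:]"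
  using nf_fscal_mult[of N c 1] by simp

lemma nf_fx_pow_mult: "nf N (fx ^ n * r) = smult ([:0,1:] ^ n) (nf N r)"
  by (induction n) (simp_all add: mult.assoc nf_fx_mult Lx_def)
lemma nf_fy_pow_mult: "nf N (fy ^ n * r) = (Ly N ^^ n) (nf N r)"
  by (induction n) (simp_all add: mult.assoc nf_fy_mult)

lemma Ly_Lx: "Ly N (Lx R) = Lx (Ly N R) + smult ([:0,1:] ^ N) R"
  by (rule poly_eqI) (simp add: coeff_Ly Lx_def dlt_def pderiv_mult algebra_simps pderiv_pCons)

lemma nf_relator_mult: "nf N (relator N * b) = 0"
proof -
  have "relator N * b = fy * (fx * b) - fx * (fy * b) - fx ^ N * b"
    by (simp add: relator_def algebra_simps)
  then show ?thesis
    by (simp add: nf_diff nf_fy_mult nf_fx_mult nf_fx_pow_mult Ly_Lx)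
qed

lemma nf_gen: "nf N (a * relator N * b) = 0"
proof (induction a rule: pm_induct)
  case zero then show ?case by simp
next
  case (single w c a)
  then show ?case
    by (simp add: distrib_right nf_add mult.assoc nf_single_mult nf_relator_mult)
qed

lemma nf_ideal: "p \<in> rel_ideal N \<Longrightarrow> nf N p = 0"
  by (induction rule: rel_ideal.induct) (simp_all add: nf_gen nf_add)

lemma eqv_nf: "eqv N p q \<Longrightarrow> nf N p = nf N q"
  unfolding eqv_def using nf_ideal nf_diff by (metis eq_iff_diff_eq_0)

lemma fpoly_superset:
  assumes "degree p < M"
  shows "fpoly p = (\<Sum>i<M. fscal (coeff p i) * fx ^ i)"
  unfolding fpoly_def using assms
  by (intro sum.mono_neutral_left) (auto simp: coeff_eq_0)

lemma fpoly_0[simp]: "fpoly 0 = 0"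
  by (simp add: fpoly_def)

lemma fscal_fx_pow_comm: "fscal c * (fx * q) = fx * (fscal c * q)"
  by (metis fscal_comm mult.assoc)

lemma fpoly_pCons: "fpoly (pCons a p) = fscal a + fx * fpoly p"
proof -
  let ?M = "Suc (degree p)"
  have d: "degree (pCons a p) < Suc ?M" by (simp add: degree_pCons_le le_imp_less_Suc)
  have "fpoly (pCons a p) = (\<Sum>i<Suc ?M. fscal (coeff (pCons a p) i) * fx ^ i)"
    by (rule fpoly_superset[OF d])
  also have "\<dots> = fscal a + (\<Sum>i<?M. fscal (coeff p i) * fx ^ Suc i)"
    by (subst sum.lessThan_Suc_shift) simp
  also have "(\<Sum>i<?M. fscal (coeff p i) * fx ^ Suc i) = fx * (\<Sum>i<?M. fscal (coeff p i) * fx ^ i)"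
    by (simp only: sum_distrib_left power_Suc fscal_fx_pow_comm)
  also have "(\<Sum>i<?M. fscal (coeff p i) * fx ^ i) = fpoly p"
    by (rule fpoly_superset[symmetric]) simp
  finally show ?thesis .
qed

lemma fpoly_add: "fpoly (p + q) = fpoly p + fpoly q"
  by (induction p q rule: poly_induct2) (simp_all add: fpoly_pCons fscal_add[symmetric] algebra_simps)

lemma fpoly_smult: "fpoly (smult c p) = fscal c * fpoly p"
  by (induction p) (simp_all add: fpoly_pCons distrib_left fscal_fx_pow_comm flip: fscal_mult)

lemma fpoly_const[simp]: "fpoly [:a:] = fscal a"
  using fpoly_pCons[of a 0] by simp

lemma fpoly_1[simp]: "fpoly 1 = 1"
  by (simp add: one_pCons)

lemma fpoly_mult: "fpoly (p * q) = fpoly p * fpoly q"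
  by (induction p) (simp_all add: fpoly_pCons fpoly_add fpoly_smult algebra_simps)

lemma fpoly_x[simp]: "fpoly [:0,1:] = fx"
  by (simp add: fpoly_pCons)

lemma fpoly_power: "fpoly (p ^ n) = fpoly p ^ n"
  by (induction n) (simp_all add: fpoly_mult)

lemma fpoly_fx_comm: "fpoly p * fx = fx * fpoly p"
  by (metis fpoly_mult fpoly_x mult.commute)

lemma fpoly_fx_pow_comm: "fx ^ n * fpoly p = fpoly p * fx ^ n"
  by (metis fpoly_mult fpoly_x fpoly_power mult.commute)

lemma fpoly_uminus: "fpoly (- p) = - fpoly p"
  using fpoly_add[of p "- p"] by (simp add: eq_neg_iff_add_eq_0 add.commute)
lemma fpoly_diff: "fpoly (p - q) = fpoly p - fpoly q"
  using fpoly_add[of p "- q"] by (simp add: fpoly_uminus)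

lemma nf_fpoly_mult: "nf N (fpoly a * r) = smult a (nf N r)"
proof (induction a)
  case 0 then show ?case by simp
next
  case (pCons b a)
  have "nf N (fpoly (pCons b a) * r) = smult [:b:] (nf N r) + Lx (smult a (nf N r))"
    by (simp add: fpoly_pCons distrib_right nf_add nf_fscal_mult mult.assoc nf_fx_mult pCons.IH)
  also have "\<dots> = smult (pCons b a) (nf N r)"
    by (simp add: Lx_def smult_add_left[symmetric])
  finally show ?case .
qed

lemma nf_fpoly: "nf N (fpoly a) = [:a:]"
  using nf_fpoly_mult[of N a 1] by simp

definition emb :: "'k::field_char_0 poly poly \<Rightarrow> 'k free_alg" where
  "emb P = (\<Sum>j\<le>degree P. fpoly (coeff P j) * fy ^ j)"

lemma emb_superset:
  assumes "degree P < M"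
  shows "emb P = (\<Sum>j<M. fpoly (coeff P j) * fy ^ j)"
  unfolding emb_def using assms
  by (intro sum.mono_neutral_left) (auto simp: coeff_eq_0)

lemma emb_0[simp]: "emb 0 = 0"
  by (simp add: emb_def)

lemma emb_pCons: "emb (pCons a P) = fpoly a + emb P * fy"
proof -
  let ?M = "Suc (degree P)"
  have d: "degree (pCons a P) < Suc ?M" by (simp add: degree_pCons_le le_imp_less_Suc)
  have "emb (pCons a P) = (\<Sum>j<Suc ?M. fpoly (coeff (pCons a P) j) * fy ^ j)"
    by (rule emb_superset[OF d])
  also have "\<dots> = fpoly a + (\<Sum>j<?M. fpoly (coeff P j) * fy ^ Suc j)"
    by (subst sum.lessThan_Suc_shift) simp
  also have "(\<Sum>j<?M. fpoly (coeff P j) * fy ^ Suc j) = (\<Sum>j<?M. fpoly (coeff P j) * fy ^ j) * fy"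
    by (simp only: sum_distrib_right power_Suc2 mult.assoc)
  also have "(\<Sum>j<?M. fpoly (coeff P j) * fy ^ j) = emb P"
    by (rule emb_superset[symmetric]) simp
  finally show ?thesis .
qed

lemma emb_add: "emb (P + Q) = emb P + emb Q"
  by (induction P Q rule: poly_induct2) (simp_all add: emb_pCons fpoly_add algebra_simps)

lemma emb_const[simp]: "emb [:a:] = fpoly a"
  using emb_pCons[of a 0] by simp

lemma emb_1[simp]: "emb 1 = 1"
  by (simp add: one_pCons)

lemma emb_smult_const: "emb (smult [:c:] P) = fscal c * emb P"
  by (induction P) (simp_all add: emb_pCons fpoly_smult fpoly_add algebra_simps)

lemma emb_Lx: "emb (Lx R) = fx * emb R"
  unfolding Lx_def
  by (induction R) (simp_all add: emb_pCons fpoly_pCons algebra_simps)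

lemma eqv_fy_fpoly: "eqv N (fy * fpoly a) (fpoly a * fy + fpoly (dlt N a))"
proof (induction a)
  case 0 then show ?case by simp
next
  case (pCons b a)
  have e1: "eqv N (fy * fx * fpoly a) ((fx * fy + fx ^ N) * fpoly a)"
    by (intro eqv_mult eqv_relator eqv_refl)
  have e2: "eqv N (fx * (fy * fpoly a)) (fx * (fpoly a * fy + fpoly (dlt N a)))"
    by (intro eqv_mult eqv_refl pCons.IH)
  have "fy * fpoly (pCons b a) = fscal b * fy + fy * fx * fpoly a"
    by (simp add: fpoly_pCons distrib_left mult.assoc fscal_comm[of b fy, symmetric])
  moreover have "eqv N (fscal b * fy + fy * fx * fpoly a) (fscal b * fy + (fx * fy + fx ^ N) * fpoly a)"
    by (intro eqv_add eqv_refl e1)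
  moreover have "(fscal b * fy + (fx * fy + fx ^ N) * fpoly a) = fscal b * fy + fx * (fy * fpoly a) + fx ^ N * fpoly a"
    by (simp add: algebra_simps)
  moreover have "eqv N (fscal b * fy + fx * (fy * fpoly a) + fx ^ N * fpoly a)
     (fscal b * fy + fx * (fpoly a * fy + fpoly (dlt N a)) + fx ^ N * fpoly a)"
    by (intro eqv_add eqv_refl e2)
  moreover have "fscal b * fy + fx * (fpoly a * fy + fpoly (dlt N a)) + fx ^ N * fpoly a
      = fpoly (pCons b a) * fy + fpoly (dlt N (pCons b a))"
    by (simp add: fpoly_pCons dlt_pCons fpoly_add fpoly_mult fpoly_power algebra_simps fpoly_fx_pow_comm)
  ultimately show ?case by (metis eqv_trans)
qed

lemma Ly_pCons: "Ly N (pCons a R) = pCons (dlt N a) ([:a:] + Ly N R)"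
  by (rule poly_eqI) (simp add: coeff_Ly coeff_pCons' algebra_simps)

lemma eqv_fy_emb: "eqv N (fy * emb R) (emb (Ly N R))"
proof (induction R)
  case 0 then show ?case by simp
next
  case (pCons a R)
  have "fy * emb (pCons a R) = fy * fpoly a + (fy * emb R) * fy"
    by (simp add: emb_pCons algebra_simps)
  moreover have "eqv N (fy * fpoly a + (fy * emb R) * fy) ((fpoly a * fy + fpoly (dlt N a)) + emb (Ly N R) * fy)"
    by (intro eqv_add eqv_mult eqv_refl eqv_fy_fpoly pCons.IH)
  moreover have "(fpoly a * fy + fpoly (dlt N a)) + emb (Ly N R) * fy = emb (Ly N (pCons a R))"
    by (simp add: Ly_pCons emb_pCons emb_add algebra_simps)
  ultimately show ?case by (metis eqv_trans)
qed

lemma eqv_single_emb_aux: "eqv N (Poly_Mapping.single (W bs) (1::'k::field_char_0)) (emb (Lw N (W bs) 1))"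
proof (induction bs)
  case Nil
  then show ?case by (simp flip: one_single)
next
  case (Cons b bs)
  have "eqv N (letter b * Poly_Mapping.single (W bs) 1) (letter b * emb (Lw N (W bs) (1::'k poly poly)))"
    by (intro eqv_mult eqv_refl Cons.IH)
  moreover have "eqv N (letter b * emb (Lw N (W bs) 1)) (emb (Lw N (W (b # bs)) (1::'k poly poly)))"
    by (cases b) (simp_all add: letter_def eqv_fy_emb emb_Lx)
  ultimately show ?case by (simp only: single_word_cons) (metis eqv_trans)
qed

lemma eqv_single_emb: "eqv N (Poly_Mapping.single w (1::'k::field_char_0)) (emb (Lw N w 1))"
  by (cases w) (simp only: eqv_single_emb_aux)

lemma eqv_emb_nf: "eqv N p (emb (nf N p))"
proof (induction p rule: pm_induct)
  case zero then show ?case by simp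
next
  case (single w c p)
  have "eqv N (Poly_Mapping.single w c) (emb (nf N (Poly_Mapping.single w c)))"
    by (subst single_scal) (simp add: nf_single emb_smult_const eqv_mult eqv_single_emb)
  then show ?case by (simp add: nf_add emb_add eqv_add single.IH)
qed

lemma Ly_pow_1: "(Ly N ^^ j) 1 = monom 1 j"
proof (induction j)
  case 0 then show ?case by (simp add: monom_0 one_pCons)
next
  case (Suc j)
  then show ?case by (simp add: Ly_def map_poly_monom monom_Suc)
qed

lemma nf_emb: "nf N (emb P) = P"
proof -
  have "nf N (emb P) = (\<Sum>j\<le>degree P. nf N (fpoly (coeff P j) * fy ^ j))"
    by (simp add: emb_def nf_sum)
  also have "\<dots> = (\<Sum>j\<le>degree P. monom (coeff P j) j)"
    by (intro sum.cong refl) (simp add: nf_fpoly_mult nf_fy_pow_mult[of N _ 1, simplified] Ly_pow_1 smult_monom)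
  also have "\<dots> = P" by (rule poly_as_sum_of_monoms)
  finally show ?thesis .
qed

lemma eqv_iff_nf: "eqv N p q \<longleftrightarrow> nf N p = nf N q"
  by (metis eqv_nf eqv_emb_nf eqv_sym eqv_trans)

definition star :: "nat \<Rightarrow> 'k::field_char_0 poly poly \<Rightarrow> 'k poly poly \<Rightarrow> 'k poly poly" where
  "star N P Q = nf N (emb P * emb Q)"

lemma nf_mult: "nf N (p * q) = star N (nf N p) (nf N q)"
  unfolding star_def by (intro eqv_nf eqv_mult eqv_emb_nf)

lemma star_formula: "star N P Q = (\<Sum>j\<le>degree P. smult (coeff P j) ((Ly N ^^ j) Q))"
proof -
  have "star N P Q = (\<Sum>j\<le>degree P. nf N (fpoly (coeff P j) * (fy ^ j * emb Q)))"
    by (simp add: star_def emb_def sum_distrib_right nf_sum mult.assoc)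
  also have "\<dots> = (\<Sum>j\<le>degree P. smult (coeff P j) ((Ly N ^^ j) Q))"
    by (simp add: nf_fpoly_mult nf_fy_pow_mult nf_emb)
  finally show ?thesis .
qed


lemma coeff_Ly_Suc: "coeff (Ly N R) (Suc k) = coeff R k + dlt N (coeff R (Suc k))"
  by (simp add: coeff_Ly)
lemma coeff_Ly_0: "coeff (Ly N R) 0 = dlt N (coeff R 0)"
  by (simp add: coeff_Ly)

lemma Ly_pow_Suc: "(Ly N ^^ Suc i) R = Ly N ((Ly N ^^ i) R)"
  by simp

lemma Ly_pow_high: "k > degree R + i \<Longrightarrow> coeff ((Ly N ^^ i) R) k = 0"
proof (induction i arbitrary: k)
  case 0 then show ?case by (simp add: coeff_eq_0)
next
  case (Suc i)
  then obtain k' where k: "k = Suc k'" by (cases k) auto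
  with Suc show ?case by (simp add: coeff_Ly_Suc)
qed

lemma Ly_pow_top: "coeff ((Ly N ^^ i) R) (degree R + i) = lead_coeff R"
proof (induction i)
  case 0 then show ?case by simp
next
  case (Suc i)
  have "coeff ((Ly N ^^ Suc i) R) (Suc (degree R + i)) = coeff ((Ly N ^^ i) R) (degree R + i)"
    by (simp add: coeff_Ly_Suc Ly_pow_high)
  then show ?case using Suc by simp
qed

lemma Ly_pow_sub:
  "degree R + i \<ge> 1 \<Longrightarrow> coeff ((Ly N ^^ i) R) (degree R + i - 1)
     = (if degree R = 0 then 0 else coeff R (degree R - 1)) + of_nat i * dlt N (lead_coeff R)"
proof (induction i)
  case 0 then show ?case by simp
next
  case (Suc i)
  show ?case
  proof (cases "degree R + i \<ge> 1")
    case True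
    have eq: "degree R + Suc i - 1 = Suc (degree R + i - 1)" using True by simp
    have "coeff ((Ly N ^^ Suc i) R) (degree R + Suc i - 1)
        = coeff ((Ly N ^^ Suc i) R) (Suc (degree R + i - 1))" by (simp only: eq)
    also have "\<dots> = coeff ((Ly N ^^ i) R) (degree R + i - 1) + dlt N (coeff ((Ly N ^^ i) R) (degree R + i))"
    proof -
      have e2: "Suc (degree R + i - 1) = degree R + i" using True by simp
      show ?thesis using coeff_Ly_Suc[of N "(Ly N ^^ i) R" "degree R + i - 1"] e2 by simp
    qed
    also have "\<dots> = (if degree R = 0 then 0 else coeff R (degree R - 1)) + of_nat (Suc i) * dlt N (lead_coeff R)"
      using Suc.IH[OF True] Ly_pow_top[where N=N and i=i and R=R] by (simp add: algebra_simps)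
    finally show ?thesis .
  next
    case False
    then have "degree R = 0" "i = 0" by auto
    then show ?thesis by (simp add: coeff_Ly_0)
  qed
qed

lemma coeff_star: "coeff (star N P Q) k = (\<Sum>j\<le>degree P. coeff P j * coeff ((Ly N ^^ j) Q) k)"
  by (simp add: star_formula coeff_sum)

lemma star_high: "k > degree P + degree Q \<Longrightarrow> coeff (star N P Q) k = 0"
  unfolding coeff_star by (intro sum.neutral) (auto simp: Ly_pow_high)

lemma star_top: "coeff (star N P Q) (degree P + degree Q) = lead_coeff P * lead_coeff Q"
proof -
  let ?d = "degree P" and ?e = "degree Q"
  have "coeff (star N P Q) (?d + ?e) = coeff P ?d * coeff ((Ly N ^^ ?d) Q) (?d + ?e)
      + (\<Sum>j\<in>{..?d} - {?d}. coeff P j * coeff ((Ly N ^^ j) Q) (?d + ?e))"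
    unfolding coeff_star by (subst sum.remove[of _ ?d]) auto
  also have "(\<Sum>j\<in>{..?d} - {?d}. coeff P j * coeff ((Ly N ^^ j) Q) (?d + ?e)) = 0"
    by (intro sum.neutral) (auto simp: Ly_pow_high)
  finally show ?thesis using Ly_pow_top[where N=N and i="degree P" and R=Q] by (simp add: add.commute)
qed

definition sub1 :: "'a::zero poly \<Rightarrow> 'a" where
  "sub1 P = (if degree P = 0 then 0 else coeff P (degree P - 1))"

lemma star_sub:
  assumes "degree P + degree Q \<ge> 1"
  shows "coeff (star N P Q) (degree P + degree Q - 1)
     = lead_coeff P * (sub1 Q + of_nat (degree P) * dlt N (lead_coeff Q)) + sub1 P * lead_coeff Q"
proof -
  let ?d = "degree P" and ?e = "degree Q" and ?k = "degree P + degree Q - 1"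
  let ?t = "\<lambda>j. coeff P j * coeff ((Ly N ^^ j) Q) ?k"
  have top: "?t ?d = lead_coeff P * (sub1 Q + of_nat ?d * dlt N (lead_coeff Q))"
    using Ly_pow_sub[of Q ?d N] assms by (simp add: sub1_def add.commute)
  show ?thesis
  proof (cases "?d = 0")
    case True
    then have "coeff (star N P Q) ?k = ?t 0" by (simp add: coeff_star)
    then show ?thesis using top True by (simp add: sub1_def)
  next
    case False
    have fin: "finite ({..?d} - {?d} - {?d - 1})" by simp
    have "coeff (star N P Q) ?k = ?t ?d + (\<Sum>j\<in>{..?d} - {?d}. ?t j)"
      unfolding coeff_star by (subst sum.remove[of _ ?d]) auto
    also have "(\<Sum>j\<in>{..?d} - {?d}. ?t j) = ?t (?d - 1) + (\<Sum>j\<in>{..?d} - {?d} - {?d - 1}. ?t j)"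
      using False by (subst sum.remove[of _ "?d - 1"]) auto
    also have "(\<Sum>j\<in>{..?d} - {?d} - {?d - 1}. ?t j) = 0"
      by (intro sum.neutral) (auto simp: Ly_pow_high)
    also have "?t (?d - 1) = sub1 P * lead_coeff Q"
    proof -
      have "?k = degree Q + (?d - 1)" using False by simp
      then show ?thesis using Ly_pow_top[where N=N and i="?d - 1" and R=Q] False by (simp add: sub1_def)
    qed
    finally show ?thesis using top by simp
  qed
qed

definition ad :: "nat \<Rightarrow> 'k::field_char_0 poly poly \<Rightarrow> 'k poly poly \<Rightarrow> 'k poly poly" where
  "ad N U B = star N U B - star N B U"

lemma ad_high: "k \<ge> degree U + degree B \<Longrightarrow> coeff (ad N U B) k = 0"
proof (cases "k = degree U + degree B")
  case True
  then show ?thesis using star_top[of N U B] star_top[of N B U]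
    by (simp add: ad_def add.commute mult.commute)
next
  case False
  assume "k \<ge> degree U + degree B"
  with False show ?thesis by (simp add: ad_def star_high add.commute)
qed

lemma ad_sub:
  assumes "degree U + degree B \<ge> 1"
  shows "coeff (ad N U B) (degree U + degree B - 1)
    = of_nat (degree U) * lead_coeff U * dlt N (lead_coeff B) - of_nat (degree B) * lead_coeff B * dlt N (lead_coeff U)"
  using star_sub[of U B N] star_sub[of B U N] assms
  by (simp add: ad_def add.commute algebra_simps)

section \<open>The key nonvanishing\<close>

lemma lead_pderiv:
  fixes r :: "'k::field_char_0 poly"
  assumes "degree r \<ge> 1"
  shows "coeff (pderiv r) (degree r - 1) = of_nat (degree r) * lead_coeff r"
  using assms by (simp add: coeff_pderiv)

lemma key_poly:
  fixes q r :: "'k::field_char_0 poly"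
  assumes q: "q \<noteq> 0" and r: "r \<noteq> 0" and ineq: "d * degree r > e * degree q"
  defines "H \<equiv> smult (of_nat d) (q * pderiv r) - smult (of_nat e) (r * pderiv q)"
  shows "H \<noteq> 0 \<and> degree H = degree q + degree r - 1"
proof -
  let ?m = "degree q" and ?s = "degree r"
  have s1: "?s \<ge> 1" using ineq by (cases "degree r") auto
  have dpr: "degree (pderiv r) = ?s - 1" by (simp add: degree_pderiv)
  have c1: "coeff (q * pderiv r) (?m + ?s - 1) = lead_coeff q * (of_nat ?s * lead_coeff r)"
  proof -
    have "?m + ?s - 1 = degree q + degree (pderiv r)" using s1 dpr by simp
    then show ?thesis using coeff_mult_degree_sum[of q "pderiv r"] dpr lead_pderiv[OF s1] by simp
  qed
  have c2: "coeff (r * pderiv q) (?m + ?s - 1) = lead_coeff r * (of_nat ?m * lead_coeff q)"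
  proof (cases "?m = 0")
    case True
    then have "pderiv q = 0" by (metis degree_eq_zeroE pderiv.simps pderiv_pCons add_0 pCons_0_0 pderiv_0)
    then show ?thesis using True by simp
  next
    case False
    have dpq: "degree (pderiv q) = ?m - 1" by (simp add: degree_pderiv)
    have "?m + ?s - 1 = degree r + degree (pderiv q)" using False dpq by simp
    then show ?thesis using coeff_mult_degree_sum[of r "pderiv q"] dpq lead_pderiv[of q] False by simp
  qed
  have cH: "coeff H (?m + ?s - 1) = (of_nat (d * ?s) - of_nat (e * ?m)) * (lead_coeff q * lead_coeff r)"
    unfolding H_def using c1 c2 by (simp add: algebra_simps)
  have "d * ?s \<noteq> e * ?m" using ineq by simp
  then have "of_nat (d * ?s) \<noteq> (of_nat (e * ?m) :: 'k)" by (metis of_nat_eq_iff)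
  then have "coeff H (?m + ?s - 1) \<noteq> 0" using cH q r by simp
  then have H0: "H \<noteq> 0" and ge: "?m + ?s - 1 \<le> degree H" by (auto intro: le_degree)
  have "degree (smult (of_nat d) (q * pderiv r)) \<le> ?m + ?s - 1"
    by (rule order.trans[OF degree_smult_le]) (use degree_mult_le[of q "pderiv r"] dpr s1 in simp)
  moreover have "degree (smult (of_nat e) (r * pderiv q)) \<le> ?m + ?s - 1"
  proof (cases "?m = 0")
    case True
    then have "pderiv q = 0" by (metis degree_eq_zeroE pderiv.simps pderiv_pCons add_0 pCons_0_0 pderiv_0)
    then show ?thesis by simp
  next
    case False
    show ?thesis
      by (rule order.trans[OF degree_smult_le]) (use degree_mult_le[of r "pderiv q"] False in \<open>simp add: degree_pderiv\<close>)
  qed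
  ultimately have "degree H \<le> ?m + ?s - 1" unfolding H_def by (rule degree_diff_le)
  with ge H0 show ?thesis by simp
qed

lemma dlt_eq: "dlt N r = [:0,1:] ^ N * pderiv r"
  by (simp add: dlt_def)

lemma ad_step:
  fixes U B :: "'k::field_char_0 poly poly"
  assumes N: "N \<ge> 1" and d1: "degree U \<ge> 1" and B: "B \<noteq> 0"
    and ineq: "degree U * degree (lead_coeff B) > degree B * degree (lead_coeff U)"
  shows "ad N U B \<noteq> 0 \<and> degree (ad N U B) = degree U + degree B - 1
     \<and> degree U * degree (lead_coeff (ad N U B)) > degree (ad N U B) * degree (lead_coeff U)"
proof -
  let ?d = "degree U" and ?e = "degree B" and ?q = "lead_coeff U" and ?r = "lead_coeff B"
  have U0: "U \<noteq> 0" using d1 by auto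
  have q0: "?q \<noteq> 0" using U0 by simp
  have r0: "?r \<noteq> 0" using B by simp
  define H where "H = smult (of_nat ?d) (?q * pderiv ?r) - smult (of_nat ?e) (?r * pderiv ?q)"
  have KH: "H \<noteq> 0 \<and> degree H = degree ?q + degree ?r - 1"
    unfolding H_def by (rule key_poly[OF q0 r0 ineq])
  have cs: "coeff (ad N U B) (?d + ?e - 1) = [:0,1:] ^ N * H"
    using ad_sub[of U B N] d1 by (simp add: H_def dlt_eq algebra_simps of_nat_poly)
  have xN0: "([:0,1:] :: 'k poly) ^ N \<noteq> 0" by simp
  have G0: "[:0,1:] ^ N * H \<noteq> 0" using KH xN0 by simp
  have dG: "degree ([:0,1:] ^ N * H) = N + (degree ?q + degree ?r - 1)"
    using KH xN0 by (simp add: degree_mult_eq degree_power_eq)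
  have hi: "\<forall>k > ?d + ?e - 1. coeff (ad N U B) k = 0"
    using ad_high[of U B] d1 by auto
  have deg: "degree (ad N U B) = ?d + ?e - 1"
    using hi G0 cs by (metis degree_le le_degree order.antisym)
  have lc: "lead_coeff (ad N U B) = [:0,1:] ^ N * H" using deg cs by simp
  have nz: "ad N U B \<noteq> 0" using cs G0 by auto
  have s1: "degree ?r \<ge> 1" using ineq by (cases "degree ?r") auto
  have "?d * (N + (degree ?q + degree ?r - 1)) > (?d + ?e - 1) * degree ?q"
  proof -
    obtain d' where d': "?d = Suc d'" using d1 by (cases ?d) auto
    obtain s' where s': "degree ?r = Suc s'" using s1 by (cases "degree ?r") auto
    obtain N' where N': "N = Suc N'" using N by (cases N) auto
    have "?e * degree ?q < Suc d' * Suc s'" using ineq d' s' by simp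
    then show ?thesis using d' s' N' by (simp add: algebra_simps)
  qed
  then show ?thesis using nz deg lc dG by simp
qed

lemma ad_iter_nonzero:
  fixes U :: "'k::field_char_0 poly poly"
  assumes N: "N \<ge> 1" and d1: "degree U \<ge> 1"
  shows "(ad N U ^^ k) [:[:0,1:]:] \<noteq> 0"
proof -
  have "(ad N U ^^ k) [:[:0,1:]:] \<noteq> 0 \<and>
      degree U * degree (lead_coeff ((ad N U ^^ k) [:[:0,1:]:])) > degree ((ad N U ^^ k) [:[:0,1:]:]) * degree (lead_coeff U)"
  proof (induction k)
    case 0 then show ?case using d1 by simp
  next
    case (Suc k)
    have "ad N U ((ad N U ^^ k) [:[:0,1:]:]) \<noteq> 0 \<and> degree (ad N U ((ad N U ^^ k) [:[:0,1:]:])) = degree U + degree ((ad N U ^^ k) [:[:0,1:]:]) - 1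
     \<and> degree U * degree (lead_coeff (ad N U ((ad N U ^^ k) [:[:0,1:]:]))) > degree (ad N U ((ad N U ^^ k) [:[:0,1:]:])) * degree (lead_coeff U)"
      by (rule ad_step[OF N d1]) (use Suc.IH in auto)
    then show ?case unfolding funpow.simps comp_apply by blast
  qed
  then show ?thesis by simp
qed

lemma star_zero_right[simp]: "star N P 0 = 0"
  by (simp add: star_def)
lemma star_zero_left[simp]: "star N 0 P = 0"
  by (simp add: star_def)
lemma ad_zero[simp]: "ad N U 0 = 0"
  by (simp add: ad_def)

lemma ad_X_nil:
  fixes B :: "'k::field_char_0 poly poly"
  shows "degree B < j \<Longrightarrow> (ad N [:[:0,1:]:] ^^ j) B = 0"
proof (induction j arbitrary: B)
  case 0 then show ?case by simp
next
  case (Suc j)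
  have hi: "\<And>k. k \<ge> degree B \<Longrightarrow> coeff (ad N [:[:0,1:]:] B) k = 0"
    using ad_high[of "[:[:0,1:]:]" B] by simp
  show ?case
  proof (cases "degree B = 0")
    case True
    then have "ad N [:[:0,1:]:] B = 0" using hi by (intro poly_eqI) simp
    then show ?thesis by (simp add: funpow_Suc_right del: funpow.simps) (induction j, auto)
  next
    case False
    have "degree (ad N [:[:0,1:]:] B) < j"
    proof -
      have "degree (ad N [:[:0,1:]:] B) \<le> degree B - 1"
        using hi False by (intro degree_le) auto
      then show ?thesis using Suc.prems False by linarith
    qed
    then show ?thesis using Suc.IH by (simp add: funpow_Suc_right del: funpow.simps)
  qed
qed


lemma nf_fx: "nf N fx = [:[:0,1:]:]"
  using nf_fx_mult[of N 1] by (simp add: Lx_def one_pCons)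

lemma nf_fy: "nf N fy = [:0,1:]"
proof -
  have "nf N fy = Ly N 1" using nf_fy_mult[of N 1] by simp
  also have "\<dots> = [:0,1:]" using Ly_pow_1[where N=N and j=1] by (simp add: monom_Suc monom_0 one_pCons)
  finally show ?thesis .
qed

lemma star_add_left: "star N (P + P') Q = star N P Q + star N P' Q"
  by (simp add: star_def emb_add distrib_right nf_add)
lemma star_add_right: "star N P (Q + Q') = star N P Q + star N P Q'"
  by (simp add: star_def emb_add distrib_left nf_add)
lemma star_const_left: "star N [:a:] Q = smult a Q"
  by (simp add: star_formula)
lemma star_smult_left: "star N (smult [:c:] P) Q = smult [:c:] (star N P Q)"
  by (simp add: star_def emb_smult_const mult.assoc nf_fscal_mult)
lemma star_one_left[simp]: "star N 1 Q = Q"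
  by (simp add: star_def nf_emb)
lemma star_one_right[simp]: "star N P 1 = P"
  by (simp add: star_def nf_emb)

lemma relation_nf: "star N [:0,1:] [:[:0,1:]:] - star N [:[:0,1:]:] [:0,1:] = ([:[:0,1:] ^ N:] :: 'k::field_char_0 poly poly)"
proof -
  have "nf N (relator N :: 'k free_alg) = 0" by (rule nf_ideal[OF I_relator])
  moreover have "nf N (relator N :: 'k free_alg) = nf N (fy * fx) - nf N (fx * fy) - nf N (fx ^ N)"
    by (simp add: relator_def nf_diff)
  moreover have "nf N (fx ^ N :: 'k free_alg) = [:[:0,1:] ^ N:]"
    using nf_fx_pow_mult[of N N 1] by (simp add: one_pCons)
  ultimately have "star N [:0,1:] [:[:0,1:]:] - star N [:[:0,1:]:] [:0,1:] - [:[:0,1:] ^ N:] = (0 :: 'k poly poly)"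
    by (simp add: nf_mult nf_fx nf_fy)
  then show ?thesis by (simp only: right_minus_eq)
qed

section \<open>Automorphisms at the normal form level\<close>

definition isS :: "nat \<Rightarrow> ('k::field_char_0 poly poly \<Rightarrow> 'k poly poly) \<Rightarrow> bool" where
  "isS N T \<longleftrightarrow> bij T \<and> (\<forall>P Q. T (P + Q) = T P + T Q) \<and> (\<forall>P Q. T (star N P Q) = star N (T P) (T Q))
     \<and> (\<forall>c P. T (smult [:c:] P) = smult [:c:] (T P)) \<and> T 1 = 1"

lemma isS_add: "isS N T \<Longrightarrow> T (P + Q) = T P + T Q" by (simp add: isS_def)
lemma isS_star: "isS N T \<Longrightarrow> T (star N P Q) = star N (T P) (T Q)" by (simp add: isS_def)
lemma isS_smult: "isS N T \<Longrightarrow> T (smult [:c:] P) = smult [:c:] (T P)" by (simp add: isS_def)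
lemma isS_one: "isS N T \<Longrightarrow> T 1 = 1" by (simp add: isS_def)
lemma isS_bij: "isS N T \<Longrightarrow> bij T" by (simp add: isS_def)
lemma isS_zero: "isS N T \<Longrightarrow> T 0 = 0"
  using isS_add[of N T 0 0] by simp
lemma isS_minus: "isS N T \<Longrightarrow> T (- P) = - T P"
  using isS_add[of N T P "- P"] isS_zero[of N T] by (simp add: eq_neg_iff_add_eq_0 add.commute)
lemma isS_diff: "isS N T \<Longrightarrow> T (P - Q) = T P - T Q"
  using isS_add[of N T P "- Q"] isS_minus[of N T Q] by simp
lemma isS_ad: "isS N T \<Longrightarrow> T (ad N P Q) = ad N (T P) (T Q)"
  by (simp add: ad_def isS_diff isS_star)
lemma isS_ad_pow: "isS N T \<Longrightarrow> T ((ad N P ^^ j) Q) = (ad N (T P) ^^ j) (T Q)"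
  by (induction j) (simp_all add: isS_ad)

lemma isS_inv: assumes "isS N T" shows "isS N (inv_into UNIV T)"
proof -
  have b: "bij T" using assms by (rule isS_bij)
  have TI: "T (inv_into UNIV T a) = a" for a using b by (simp add: bij_def surj_f_inv_f)
  have IT: "inv_into UNIV T (T a) = a" for a using b by (simp add: bij_def inv_f_f)
  have inj: "T a = T b' \<Longrightarrow> a = b'" for a b' using b by (metis IT)
  show ?thesis unfolding isS_def
  proof (intro conjI allI)
    show "bij (inv_into UNIV T)" using b by (rule bij_imp_bij_inv)
    show "inv_into UNIV T (P + Q) = inv_into UNIV T P + inv_into UNIV T Q" for P Q
      by (rule inj) (simp add: TI isS_add[OF assms])
    show "inv_into UNIV T (star N P Q) = star N (inv_into UNIV T P) (inv_into UNIV T Q)" for P Q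
      by (rule inj) (simp add: TI isS_star[OF assms])
    show "inv_into UNIV T (smult [:c:] P) = smult [:c:] (inv_into UNIV T P)" for c P
      by (rule inj) (simp add: TI isS_smult[OF assms])
    show "inv_into UNIV T 1 = 1"
      by (rule inj) (simp add: TI isS_one[OF assms])
  qed
qed

lemma isS_deg0:
  assumes T: "isS N T" and N: "N \<ge> 1"
  shows "degree (T [:[:0,1:]:]) = 0"
proof (rule ccontr)
  assume "degree (T [:[:0,1:]:]) \<noteq> 0"
  then have d1: "degree (T [:[:0,1:]:]) \<ge> 1" by simp
  obtain B0 where B0: "T B0 = [:[:0,1:]:]" using isS_bij[OF T] by (metis bij_pointE)
  have "(ad N [:[:0,1:]:] ^^ Suc (degree B0)) B0 = 0" by (rule ad_X_nil) simp
  then have "T ((ad N [:[:0,1:]:] ^^ Suc (degree B0)) B0) = 0" by (simp add: isS_zero[OF T])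
  then have "(ad N (T [:[:0,1:]:]) ^^ Suc (degree B0)) [:[:0,1:]:] = 0"
    by (simp only: isS_ad_pow[OF T] B0)
  with ad_iter_nonzero[OF N d1] show False by blast
qed

lemma isS_const:
  assumes T: "isS N T" and q: "T [:[:0,1:]:] = [:q:]"
  shows "T [:r:] = [:pcompose r q:]"
proof (induction r)
  case 0 then show ?case using isS_zero[OF T] by simp
next
  case (pCons b r)
  have Tb: "T [:[:b:]:] = [:[:b:]:]"
    using isS_smult[OF T, of b 1] isS_one[OF T] by (simp add: one_pCons)
  have "[:pCons b r:] = smult [:b:] 1 + star N [:[:0,1:]:] [:r:]"
    by (simp add: star_const_left one_pCons)
  then have "T [:pCons b r:] = smult [:b:] 1 + star N [:q:] [:pcompose r q:]"
    by (simp add: isS_add[OF T] Tb isS_star[OF T] q pCons.IH)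
  also have "\<dots> = [:pcompose (pCons b r) q:]"
    by (simp add: star_const_left one_pCons pcompose_pCons)
  finally show ?case .
qed

lemma pcompose_one[simp]: "pcompose 1 (q::'a::comm_ring_1 poly) = 1"
  by (metis pcompose_const one_pCons)
lemma pcompose_x[simp]: "pcompose [:0,1:] (q::'a::comm_ring_1 poly) = q"
  by (simp add: pcompose_pCons)

lemma pcompose_x_pow: "pcompose ([:0,1:] ^ n) (q::'a::comm_ring_1 poly) = q ^ n"
  by (induction n) (simp_all add: pcompose_mult pcompose_pCons)

lemma isS_X_form:
  assumes T: "isS N T" and N: "N \<ge> 1"
  shows "\<exists>q. T [:[:0,1:]:] = [:q:] \<and> degree q = 1"
proof -
  obtain q where q: "T [:[:0,1:]:] = [:q:]"
    using isS_deg0[OF T N] by (metis degree_eq_zeroE)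
  have Ti: "isS N (inv_into UNIV T)" by (rule isS_inv[OF T])
  obtain r where r: "inv_into UNIV T [:[:0,1:]:] = [:r:]"
    using isS_deg0[OF Ti N] by (metis degree_eq_zeroE)
  have b: "bij T" by (rule isS_bij[OF T])
  have "T (inv_into UNIV T [:[:0,1:]:]) = [:[:0,1:]:]" using b by (simp add: bij_def surj_f_inv_f)
  then have "[:pcompose r q:] = [:[:0,1:]:]" using isS_const[OF T q, of r] r by simp
  then have "pcompose r q = [:0,1:]" by simp
  then have "degree r * degree q = 1" using degree_pcompose[of r q] by simp
  then have "degree q = 1" by simp
  with q show ?thesis by blast
qed

lemma poly_deg1: "degree (q::'a::zero poly) = 1 \<Longrightarrow> q = [:coeff q 0, coeff q 1:] \<and> coeff q 1 \<noteq> 0"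
proof
  assume d: "degree q = 1"
  show "q = [:coeff q 0, coeff q 1:]"
  proof (rule poly_eqI)
    fix n show "coeff q n = coeff [:coeff q 0, coeff q 1:] n"
      using d by (cases n; cases "n - 1") (auto simp: coeff_eq_0)
  qed
  have "q \<noteq> 0" using d by auto
  then show "coeff q 1 \<noteq> 0" using d by (metis leading_coeff_0_iff)
qed

lemma poly_deg1': "degree (V::'a::zero poly) = 1 \<Longrightarrow> V = [:coeff V 0, coeff V 1:]"
  using poly_deg1 by blast

theorem isS_structure:
  fixes T :: "'k::field_char_0 poly poly \<Rightarrow> 'k poly poly"
  assumes T: "isS N T" and N: "N \<ge> 1"
  shows "\<exists>l f. l \<noteq> 0 \<and> T [:[:0,1:]:] = [:[:0,l:]:] \<and> T [:0,1:] = [:f, [:l ^ (N - 1):]:]"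
proof -
  obtain q where q: "T [:[:0,1:]:] = [:q:]" and dq: "degree q = 1"
    using isS_X_form[OF T N] by blast
  define c l where "c = coeff q 0" and "l = coeff q 1"
  have qf: "q = [:c, l:]" and l0: "l \<noteq> 0" using poly_deg1[OF dq] by (auto simp: c_def l_def)
  define V where "V = T [:0,1:]"
  have rel: "ad N V [:q:] = [:q ^ N:]"
  proof -
    have "T (star N [:0,1:] [:[:0,1:]:] - star N [:[:0,1:]:] [:0,1:]) = T [:[:0,1:] ^ N:]"
      by (simp only: relation_nf)
    then show ?thesis
      by (simp add: isS_diff[OF T] isS_star[OF T] q isS_const[OF T q] pcompose_x_pow ad_def V_def)
  qed
  have dU: "degree [:q:] = 0" by simp
  have dlt_q: "dlt N q = [:0,1:] ^ N * [:l:]" by (simp add: dlt_def qf pderiv_pCons)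
  have xN0: "([:0,1:]::'k poly) ^ N \<noteq> 0" by simp
  have qN0: "q ^ N \<noteq> 0" using dq by auto
  consider "degree V = 0" | "degree V = 1" | "degree V \<ge> 2" by linarith
  then show ?thesis
  proof cases
    case 1
    have "coeff (ad N V [:q:]) 0 = 0" using ad_high[of V "[:q:]" 0 N] 1 by simp
    with rel qN0 show ?thesis by simp
  next
    case 3
    have V0: "V \<noteq> 0" using 3 by auto
    have "coeff (ad N V [:q:]) (degree V - 1) = of_nat (degree V) * lead_coeff V * ([:0,1:] ^ N * [:l:])"
      using ad_sub[of V "[:q:]" N] 3 dlt_q by simp
    moreover have "coeff (ad N V [:q:]) (degree V - 1) = 0"
      using rel 3 by (simp add: coeff_pCons')
    moreover have "of_nat (degree V) * lead_coeff V * ([:0,1:] ^ N * [:l:]) \<noteq> (0::'k poly)"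
      using V0 l0 3 xN0 by (simp add: of_nat_poly)
    ultimately show ?thesis by simp
  next
    case 2
    define p1 where "p1 = lead_coeff V"
    have eq: "p1 * ([:0,1:] ^ N * [:l:]) = q ^ N"
      using ad_sub[of V "[:q:]" N] 2 dlt_q rel by (simp add: p1_def)
    have px: "poly (([:0,1:]::'k poly) ^ N) 0 = 0" using N by (simp add: power_0_left)
    have z: "(0::'k) ^ N = 0" using N by (simp add: power_0_left)
    have "poly (q ^ N) 0 = 0" using arg_cong[OF eq, of "\<lambda>p. poly p 0"] z by simp
    then have "c ^ N = 0" by (simp add: qf)
    then have c0: "c = 0" by simp
    have "q ^ N = smult (l ^ N) ([:0,1:] ^ N)"
      by (simp add: qf c0 flip: smult_power)
    then have "smult l (p1 * [:0,1:] ^ N) = smult (l ^ N) ([:0,1:] ^ N)"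
      using eq by (simp add: algebra_simps)
    moreover have "l ^ N = l * l ^ (N - 1)" using N by (cases N) auto
    ultimately have "smult l (p1 * [:0,1:] ^ N) = smult l (smult (l ^ (N - 1)) ([:0,1:] ^ N))"
      by simp
    then have "p1 * [:0,1:] ^ N = smult (l ^ (N - 1)) ([:0,1:] ^ N)" using l0 by (rule smult_cancel[rotated])
    then have "p1 * [:0,1:] ^ N = [:l ^ (N - 1):] * [:0,1:] ^ N" by simp
    then have p1v: "p1 = [:l ^ (N - 1):]" using xN0 by (metis mult_right_cancel)
    have "V = [:coeff V 0, p1:]" using poly_deg1'[OF 2] 2 by (simp add: p1_def)
    then show ?thesis using l0 q qf c0 p1v V_def by auto
  qed
qed


definition Nf :: "nat \<Rightarrow> 'k::field_char_0 free_alg set \<Rightarrow> 'k poly poly" where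
  "Nf N P = nf N (rep P)"

lemma Nf_cls: "Nf N (cls N p) = nf N p"
  by (simp add: Nf_def eqv_nf rep_cls)

lemma cls_eq_nf: "cls N p = cls N q \<longleftrightarrow> nf N p = nf N q"
  by (simp add: cls_eq_iff eqv_iff_nf)

lemma cls_in_A[simp]: "cls N p \<in> A N"
  by (simp add: A_def)

lemma A_cases: "P \<in> A N \<Longrightarrow> (\<And>p. P = cls N p \<Longrightarrow> thesis) \<Longrightarrow> thesis"
  by (auto simp: A_def)

lemma cls_emb_Nf: "P \<in> A N \<Longrightarrow> cls N (emb (Nf N P)) = P"
  by (erule A_cases) (simp add: Nf_cls cls_eq_nf nf_emb)

lemma Nf_inj: "P \<in> A N \<Longrightarrow> Q \<in> A N \<Longrightarrow> Nf N P = Nf N Q \<Longrightarrow> P = Q"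
  by (metis cls_emb_Nf)

lemma A_add_in[simp]: "A_add N P Q \<in> A N" by (simp add: A_add_def)
lemma A_mult_in[simp]: "A_mult N P Q \<in> A N" by (simp add: A_mult_def)
lemma A_scale_in[simp]: "A_scale N c P \<in> A N" by (simp add: A_scale_def)
lemma A_one_in[simp]: "A_one N \<in> A N" by (simp add: A_one_def)
lemma A_x_in[simp]: "A_x N \<in> A N" by (simp add: A_x_def)
lemma A_y_in[simp]: "A_y N \<in> A N" by (simp add: A_y_def)
lemma A_poly_in[simp]: "A_poly N f \<in> A N" by (simp add: A_poly_def)

lemma Nf_add: "Nf N (A_add N P Q) = Nf N P + Nf N Q"
  unfolding A_add_def Nf_cls by (simp add: nf_add Nf_def)
lemma Nf_mult: "Nf N (A_mult N P Q) = star N (Nf N P) (Nf N Q)"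
  unfolding A_mult_def Nf_cls by (simp add: nf_mult Nf_def)
lemma Nf_scale: "Nf N (A_scale N c P) = smult [:c:] (Nf N P)"
  unfolding A_scale_def Nf_cls by (simp add: nf_fscal_mult Nf_def)
lemma Nf_one: "Nf N (A_one N) = 1"
  by (simp add: A_one_def Nf_cls)
lemma Nf_x: "Nf N (A_x N) = [:[:0,1:]:]"
  by (simp add: A_x_def Nf_cls nf_fx)
lemma Nf_y: "Nf N (A_y N) = [:0,1:]"
  by (simp add: A_y_def Nf_cls nf_fy)
lemma Nf_poly: "Nf N (A_poly N f) = [:f:]"
  by (simp add: A_poly_def Nf_cls nf_fpoly)

lemma aut_bij: "is_alg_aut N \<sigma> \<Longrightarrow> bij_betw \<sigma> (A N) (A N)"
  by (simp add: is_alg_aut_def Bij_def)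
lemma aut_ext: "is_alg_aut N \<sigma> \<Longrightarrow> \<sigma> \<in> extensional (A N)"
  by (simp add: is_alg_aut_def Bij_def)
lemma aut_in: "is_alg_aut N \<sigma> \<Longrightarrow> P \<in> A N \<Longrightarrow> \<sigma> P \<in> A N"
  using aut_bij bij_betwE by blast
lemma aut_add: "is_alg_aut N \<sigma> \<Longrightarrow> P \<in> A N \<Longrightarrow> Q \<in> A N \<Longrightarrow> \<sigma> (A_add N P Q) = A_add N (\<sigma> P) (\<sigma> Q)"
  by (simp add: is_alg_aut_def)
lemma aut_mult: "is_alg_aut N \<sigma> \<Longrightarrow> P \<in> A N \<Longrightarrow> Q \<in> A N \<Longrightarrow> \<sigma> (A_mult N P Q) = A_mult N (\<sigma> P) (\<sigma> Q)"
  by (simp add: is_alg_aut_def)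
lemma aut_scale: "is_alg_aut N \<sigma> \<Longrightarrow> P \<in> A N \<Longrightarrow> \<sigma> (A_scale N c P) = A_scale N c (\<sigma> P)"
  by (simp add: is_alg_aut_def)
lemma aut_one: "is_alg_aut N \<sigma> \<Longrightarrow> \<sigma> (A_one N) = A_one N"
  by (simp add: is_alg_aut_def)

definition Tof :: "nat \<Rightarrow> ('k::field_char_0 free_alg set \<Rightarrow> 'k free_alg set) \<Rightarrow> 'k poly poly \<Rightarrow> 'k poly poly" where
  "Tof N \<sigma> R = Nf N (\<sigma> (cls N (emb R)))"

lemma Tof_Nf: "is_alg_aut N \<sigma> \<Longrightarrow> P \<in> A N \<Longrightarrow> Nf N (\<sigma> P) = Tof N \<sigma> (Nf N P)"
  by (simp add: Tof_def cls_emb_Nf)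

lemma Tof_isS:
  assumes s: "is_alg_aut N \<sigma>"
  shows "isS N (Tof N \<sigma>)"
  unfolding isS_def
proof (intro conjI allI)
  have b: "bij_betw \<sigma> (A N) (A N)" by (rule aut_bij[OF s])
  show "bij (Tof N \<sigma>)"
  proof (rule bijI)
    show "inj (Tof N \<sigma>)"
    proof (rule injI)
      fix R R' assume e: "Tof N \<sigma> R = Tof N \<sigma> R'"
      have i1: "\<sigma> (cls N (emb R)) \<in> A N" "\<sigma> (cls N (emb R')) \<in> A N" by (simp_all add: aut_in[OF s])
      have "\<sigma> (cls N (emb R)) = \<sigma> (cls N (emb R'))"
        using e unfolding Tof_def by (rule Nf_inj[OF i1, rotated])
      then have "cls N (emb R) = cls N (emb R')"
        using b by (auto simp: bij_betw_def dest: inj_onD)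
      then show "R = R'" by (simp add: cls_eq_nf nf_emb)
    qed
    show "surj (Tof N \<sigma>)"
      unfolding surj_def
    proof
      fix R
      have "cls N (emb R) \<in> \<sigma> ` A N" using b by (simp add: bij_betw_def)
      then obtain P where P: "P \<in> A N" "\<sigma> P = cls N (emb R)" by auto
      have "Tof N \<sigma> (Nf N P) = R"
        using P by (simp add: Tof_def cls_emb_Nf Nf_cls nf_emb)
      then show "\<exists>x. R = Tof N \<sigma> x" by metis
    qed
  qed
  show "Tof N \<sigma> (P + Q) = Tof N \<sigma> P + Tof N \<sigma> Q" for P Q
  proof -
    have "cls N (emb (P + Q)) = A_add N (cls N (emb P)) (cls N (emb Q))"
      by (simp add: emb_add A_add_cls)
    then show ?thesis by (simp add: Tof_def aut_add[OF s] Nf_add)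
  qed
  show "Tof N \<sigma> (star N P Q) = star N (Tof N \<sigma> P) (Tof N \<sigma> Q)" for P Q
  proof -
    have "cls N (emb (star N P Q)) = A_mult N (cls N (emb P)) (cls N (emb Q))"
      by (simp add: A_mult_cls cls_eq_nf nf_emb star_def)
    then show ?thesis by (simp add: Tof_def aut_mult[OF s] Nf_mult)
  qed
  show "Tof N \<sigma> (smult [:c:] P) = smult [:c:] (Tof N \<sigma> P)" for c P
  proof -
    have "cls N (emb (smult [:c:] P)) = A_scale N c (cls N (emb P))"
      by (simp add: emb_smult_const A_scale_cls)
    then show ?thesis by (simp add: Tof_def aut_scale[OF s] Nf_scale)
  qed
  show "Tof N \<sigma> 1 = 1"
    using aut_one[OF s] by (simp add: Tof_def A_one_def Nf_cls)
qed

theorem aut_is_phi: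
  assumes s: "is_alg_aut N \<sigma>" and N: "N \<ge> 1"
  shows "\<exists>f l. l \<noteq> (0::'k::field_char_0) \<and> is_phi N f l \<sigma>"
proof -
  obtain l f where l0: "l \<noteq> (0::'k)" and TX: "Tof N \<sigma> [:[:0,1:]:] = [:[:0,l:]:]"
    and TY: "Tof N \<sigma> [:0,1:] = [:f, [:l ^ (N - 1):]:]"
    using isS_structure[OF Tof_isS[OF s] N] by blast
  have "\<sigma> (A_x N) = A_scale N l (A_x N)"
  proof (rule Nf_inj)
    show "\<sigma> (A_x N) \<in> A N" by (simp add: aut_in[OF s])
    show "Nf N (\<sigma> (A_x N)) = Nf N (A_scale N l (A_x N))"
      by (simp add: Tof_Nf[OF s] Nf_x TX Nf_scale)
  qed simp
  moreover have "\<sigma> (A_y N) = A_add N (A_scale N (l ^ (N - 1)) (A_y N)) (A_poly N f)"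
  proof (rule Nf_inj)
    show "\<sigma> (A_y N) \<in> A N" by (simp add: aut_in[OF s])
    show "Nf N (\<sigma> (A_y N)) = Nf N (A_add N (A_scale N (l ^ (N - 1)) (A_y N)) (A_poly N f))"
      by (simp add: Tof_Nf[OF s] Nf_y TY Nf_scale Nf_add Nf_poly)
  qed simp
  ultimately show ?thesis using s l0 unfolding is_phi_def by blast
qed

section \<open>Uniqueness\<close>

lemma cls_zero: "cls N 0 = A_scale N 0 (A_one N)"
  by (simp add: A_one_def A_scale_cls)

lemma cls_single_word:
  fixes \<sigma>1 \<sigma>2 :: "'k::field_char_0 free_alg set \<Rightarrow> 'k free_alg set"
  assumes s1: "is_alg_aut N \<sigma>1" and s2: "is_alg_aut N \<sigma>2"
    and x: "\<sigma>1 (A_x N) = \<sigma>2 (A_x N)" and y: "\<sigma>1 (A_y N) = \<sigma>2 (A_y N)"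
  shows "\<sigma>1 (cls N (Poly_Mapping.single (W bs) (1::'k))) = \<sigma>2 (cls N (Poly_Mapping.single (W bs) 1))"
proof (induction bs)
  case Nil
  have "cls N (Poly_Mapping.single (W []) (1::'k)) = A_one N"
    by (simp add: A_one_def flip: one_single)
  then show ?case by (simp add: aut_one[OF s1] aut_one[OF s2])
next
  case (Cons b bs)
  have e: "cls N (Poly_Mapping.single (W (b # bs)) (1::'k)) = A_mult N (if b then A_y N else A_x N) (cls N (Poly_Mapping.single (W bs) 1))"
    by (simp add: single_word_cons A_mult_cls letter_def A_x_def A_y_def)
  have xy: "\<sigma>1 (if b then A_y N else A_x N) = \<sigma>2 (if b then A_y N else A_x N)" using x y by simp
  have i: "(if b then A_y N else A_x N) \<in> A N" by simp
  show ?case unfolding e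
    by (simp only: aut_mult[OF s1 i cls_in_A] aut_mult[OF s2 i cls_in_A] xy Cons.IH)
qed

lemma aut_unique:
  fixes \<sigma>1 \<sigma>2 :: "'k::field_char_0 free_alg set \<Rightarrow> 'k free_alg set"
  assumes s1: "is_alg_aut N \<sigma>1" and s2: "is_alg_aut N \<sigma>2"
    and x: "\<sigma>1 (A_x N) = \<sigma>2 (A_x N)" and y: "\<sigma>1 (A_y N) = \<sigma>2 (A_y N)"
  shows "\<sigma>1 = \<sigma>2"
proof
  fix P
  show "\<sigma>1 P = \<sigma>2 P"
  proof (cases "P \<in> A N")
    case False
    then show ?thesis using aut_ext[OF s1] aut_ext[OF s2] by (simp add: extensional_def)
  next
    case True
    have "\<sigma>1 (cls N p) = \<sigma>2 (cls N p)" for p :: "'k free_alg"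
    proof (induction p rule: pm_induct)
      case zero then show ?case by (simp add: cls_zero aut_scale[OF s1] aut_scale[OF s2] aut_one[OF s1] aut_one[OF s2])
    next
      case (single w c p)
      obtain bs where w: "w = W bs" by (cases w)
      have "\<sigma>1 (cls N (Poly_Mapping.single w 1)) = \<sigma>2 (cls N (Poly_Mapping.single w 1))"
        using cls_single_word[OF s1 s2 x y, of bs] w by simp
      moreover have "cls N (Poly_Mapping.single w c + p) = A_add N (A_scale N c (cls N (Poly_Mapping.single w 1))) (cls N p)"
        by (simp add: A_add_cls A_scale_cls flip: single_scal)
      ultimately show ?case using single.IH by (simp add: aut_add[OF s1] aut_add[OF s2] aut_scale[OF s1] aut_scale[OF s2])
    qed
    then show ?thesis using True by (auto elim: A_cases)
  qed
qed


section \<open>The endomorphisms of the free algebra\<close>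

definition Xv :: "'k::field_char_0 \<Rightarrow> 'k free_alg" where
  "Xv l = fscal l * fx"
definition Yv :: "nat \<Rightarrow> 'k::field_char_0 poly \<Rightarrow> 'k \<Rightarrow> 'k free_alg" where
  "Yv N f l = fscal (l ^ (N - 1)) * fy + fpoly f"

fun evw :: "nat \<Rightarrow> 'k::field_char_0 poly \<Rightarrow> 'k \<Rightarrow> word \<Rightarrow> 'k free_alg" where
  "evw N f l (W bs) = foldr (\<lambda>b acc. (if b then Yv N f l else Xv l) * acc) bs 1"

definition ev :: "nat \<Rightarrow> 'k::field_char_0 poly \<Rightarrow> 'k \<Rightarrow> 'k free_alg \<Rightarrow> 'k free_alg" where
  "ev N f l p = lin (\<lambda>c q. fscal c * q) (evw N f l) p"

lemma ev_single: "ev N f l (Poly_Mapping.single w c) = fscal c * evw N f l w"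
  unfolding ev_def by (rule lin_single) simp
lemma ev_add: "ev N f l (p + q) = ev N f l p + ev N f l q"
  unfolding ev_def by (rule lin_add) (simp_all add: distrib_right flip: fscal_add)
lemma ev_0[simp]: "ev N f l 0 = 0"
  by (simp add: ev_def)
lemma ev_uminus: "ev N f l (- p) = - ev N f l p"
  using ev_add[of N f l p "- p"] by (simp add: eq_neg_iff_add_eq_0 add.commute)
lemma ev_diff: "ev N f l (p - q) = ev N f l p - ev N f l q"
  using ev_add[of N f l p "- q"] by (simp add: ev_uminus)

lemma evw_append: "evw N f l (w + v) = evw N f l w * evw N f l v"
proof (cases w; cases v)
  fix bs cs assume "w = W bs" "v = W cs"
  then show ?thesis by (induction bs arbitrary: w) (simp_all add: mult.assoc)
qed

lemma fscal_mult_mult: "fscal c * p * (fscal d * q) = fscal (c * d) * (p * q)"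
  by (metis fscal_comm fscal_mult mult.assoc)

lemma ev_single_mult: "ev N f l (Poly_Mapping.single w c * q) = ev N f l (Poly_Mapping.single w c) * ev N f l q"
proof (induction q rule: pm_induct)
  case zero then show ?case by simp
next
  case (single v d q)
  then show ?case
    by (simp add: distrib_left ev_add mult_single ev_single evw_append fscal_mult_mult)
qed

lemma ev_mult: "ev N f l (p * q) = ev N f l p * ev N f l q"
proof (induction p rule: pm_induct)
  case zero then show ?case by simp
next
  case (single w c p)
  then show ?case by (simp add: distrib_right ev_add ev_single_mult)
qed

lemma ev_fscal: "ev N f l (fscal c) = fscal c"
  by (simp add: fscal_def ev_single)
lemma ev_1[simp]: "ev N f l 1 = 1"
  using ev_fscal[of N f l 1] by simp
lemma ev_fx: "ev N f l fx = Xv l"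
  by (simp add: fx_def ev_single)
lemma ev_fy: "ev N f l fy = Yv N f l"
  by (simp add: fy_def ev_single)
lemma ev_fscal_mult: "ev N f l (fscal c * p) = fscal c * ev N f l p"
  by (simp add: ev_mult ev_fscal)

lemma fpoly_lin: "fpoly [:0, l:] = fscal l * fx"
  by (simp add: fpoly_pCons fscal_comm)

lemma ev_fpoly: "ev N f l (fpoly g) = fpoly (pcompose g [:0, l:])"
proof (induction g)
  case 0 then show ?case by simp
next
  case (pCons a g)
  then show ?case
    by (simp add: fpoly_pCons ev_add ev_fscal ev_mult ev_fx pcompose_pCons fpoly_add fpoly_mult
        fpoly_lin Xv_def mult.assoc fpoly_smult fscal_fx_pow_comm)
qed

lemma mult_fscal_left: "p * (fscal c * q) = fscal c * (p * q)"
  by (metis fscal_comm mult.assoc)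

lemma ev_power: "ev N f l (p ^ n) = ev N f l p ^ n"
  by (induction n) (simp_all add: ev_mult)

lemma ev_relator:
  assumes N: "N \<ge> 1"
  shows "ev N f l (relator N) = fscal (l ^ N) * relator N"
proof -
  let ?a = "l ^ (N - 1)" and ?F = "fpoly f"
  have al: "?a * l = l ^ N" "l * ?a = l ^ N" using N by (cases N; simp)+
  have 1: "Yv N f l * Xv l = fscal (l ^ N) * (fy * fx) + fscal l * (?F * fx)"
  proof -
    have "Yv N f l * Xv l = fscal ?a * fy * (fscal l * fx) + ?F * (fscal l * fx)"
      unfolding Yv_def Xv_def by (rule distrib_right)
    also have "\<dots> = fscal (?a * l) * (fy * fx) + fscal l * (?F * fx)"
      by (simp only: fscal_mult_mult[of ?a fy l fx] mult_fscal_left[of ?F l fx])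
    finally show ?thesis by (simp only: al)
  qed
  have 2: "Xv l * Yv N f l = fscal (l ^ N) * (fx * fy) + fscal l * (fx * ?F)"
  proof -
    have "Xv l * Yv N f l = fscal l * fx * (fscal ?a * fy) + fscal l * (fx * ?F)"
      unfolding Yv_def Xv_def by (simp only: distrib_left mult.assoc)
    also have "\<dots> = fscal (l * ?a) * (fx * fy) + fscal l * (fx * ?F)"
      by (simp only: fscal_mult_mult[of l fx ?a fy])
    finally show ?thesis by (simp only: al)
  qed
  have 3: "Xv l ^ N = fscal (l ^ N) * fx ^ N"
    by (simp add: Xv_def fscal_pow_mult)
  have 4: "?F * fx = fx * ?F" by (rule fpoly_fx_comm)
  have "ev N f l (relator N) = Yv N f l * Xv l - Xv l * Yv N f l - Xv l ^ N"
    by (simp add: relator_def ev_diff ev_mult ev_fx ev_fy ev_power)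
  also have "\<dots> = fscal (l ^ N) * (fy * fx) - fscal (l ^ N) * (fx * fy) - fscal (l ^ N) * fx ^ N"
    by (simp only: 1 2 3 4) simp
  also have "\<dots> = fscal (l ^ N) * relator N"
    by (simp add: relator_def right_diff_distrib)
  finally show ?thesis .
qed


lemma ev_ideal:
  assumes N: "N \<ge> 1"
  shows "p \<in> rel_ideal N \<Longrightarrow> ev N f l p \<in> rel_ideal N"
proof (induction rule: rel_ideal.induct)
  case (gen a b)
  have "ev N f l (a * relator N * b) = (ev N f l a * fscal (l ^ N)) * relator N * ev N f l b"
    by (simp add: ev_mult ev_relator[OF N] mult.assoc)
  then show ?case by (metis rel_ideal.gen)
next
  case zero then show ?case by (simp add: rel_ideal.zero)
next
  case (add p q) then show ?case by (simp add: ev_add rel_ideal.add)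
qed

lemma ev_eqv: "N \<ge> 1 \<Longrightarrow> eqv N p q \<Longrightarrow> eqv N (ev N f l p) (ev N f l q)"
  unfolding eqv_def by (metis ev_diff ev_ideal)

definition gprod :: "nat \<Rightarrow> 'k::field_char_0 poly \<times> 'k \<Rightarrow> 'k poly \<times> 'k \<Rightarrow> 'k poly \<times> 'k" where
  "gprod N a b = (smult (snd b ^ (N - 1)) (fst a) + pcompose (fst b) [:0, snd a:], snd a * snd b)"

lemma ev_Xv: "ev N f l (Xv m) = Xv (l * m)"
  by (simp add: Xv_def ev_fscal_mult ev_fx fscal_mult_mult[of m 1 l fx, simplified] mult.commute)

lemma fscal_fscal: "fscal a * (fscal b * p) = fscal (a * b) * p"
  by (simp add: mult.assoc[symmetric] fscal_mult)

lemma ev_Yv: "ev N f l (Yv N g m) = Yv N (fst (gprod N (f, l) (g, m))) (snd (gprod N (f, l) (g, m)))"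
proof -
  have "ev N f l (Yv N g m) = fscal (m ^ (N - 1)) * (fscal (l ^ (N - 1)) * fy + fpoly f) + fpoly (pcompose g [:0, l:])"
    by (simp add: Yv_def ev_add ev_fscal_mult ev_fy ev_fpoly)
  also have "\<dots> = fscal ((l * m) ^ (N - 1)) * fy + fpoly (smult (m ^ (N - 1)) f + pcompose g [:0, l:])"
    by (simp add: distrib_left fpoly_add fpoly_smult fscal_fscal power_mult_distrib ac_simps)
  finally show ?thesis by (simp add: gprod_def Yv_def)
qed

lemma ev_evw: "ev N f l (evw N g m w) = evw N (fst (gprod N (f, l) (g, m))) (snd (gprod N (f, l) (g, m))) w"
proof (cases w)
  case (W bs)
  show ?thesis unfolding W
  proof (induction bs)
    case Nil then show ?case by simp
  next
    case (Cons b bs)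
    then show ?case
      by (cases b) (simp_all add: ev_mult ev_Yv ev_Xv gprod_def)
  qed
qed

lemma ev_comp: "ev N f l (ev N g m p) = ev N (fst (gprod N (f, l) (g, m))) (snd (gprod N (f, l) (g, m))) p"
proof (induction p rule: pm_induct)
  case zero then show ?case by simp
next
  case (single w c p)
  then show ?case by (simp add: ev_add ev_single ev_fscal_mult ev_evw)
qed

lemma evw_id: "evw N 0 1 w = Poly_Mapping.single w (1::'k::field_char_0)"
proof (cases w)
  case (W bs)
  show ?thesis unfolding W
  proof (induction bs)
    case Nil then show ?case by (simp flip: one_single)
  next
    case (Cons b bs)
    then show ?case by (cases b) (simp_all add: single_word_cons letter_def Xv_def Yv_def)
  qed
qed

lemma ev_id: "ev N 0 1 p = (p :: 'k::field_char_0 free_alg)"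
proof (induction p rule: pm_induct)
  case zero then show ?case by simp
next
  case (single w c p)
  then show ?case by (simp add: ev_add ev_single evw_id fscal_mult_single)
qed

definition phi' :: "nat \<Rightarrow> 'k::field_char_0 poly \<Rightarrow> 'k \<Rightarrow> 'k free_alg set \<Rightarrow> 'k free_alg set" where
  "phi' N f l = restrict (\<lambda>P. cls N (ev N f l (rep P))) (A N)"

lemma phi'_cls: "N \<ge> 1 \<Longrightarrow> phi' N f l (cls N p) = cls N (ev N f l p)"
  unfolding phi'_def by (simp add: cls_eq_iff ev_eqv rep_cls)

lemma phi'_comp:
  assumes N: "N \<ge> 1" and P: "P \<in> A N"
  shows "phi' N f l (phi' N g m P) = phi' N (fst (gprod N (f, l) (g, m))) (snd (gprod N (f, l) (g, m))) P"
  using P by (elim A_cases) (simp add: phi'_cls[OF N] ev_comp)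

lemma phi'_id: "N \<ge> 1 \<Longrightarrow> P \<in> A N \<Longrightarrow> phi' N 0 (1::'k::field_char_0) P = P"
  by (elim A_cases) (simp add: phi'_cls ev_id)

lemma phi'_in: "phi' N f l P \<in> A N \<or> P \<notin> A N"
  by (simp add: phi'_def)

lemma phi'_in2: "P \<in> A N \<Longrightarrow> phi' N f l P \<in> A N"
  by (simp add: phi'_def)

definition ginv :: "nat \<Rightarrow> 'k::field_char_0 poly \<Rightarrow> 'k \<Rightarrow> 'k poly \<times> 'k" where
  "ginv N f l = (smult (- (inverse l ^ (N - 1))) (pcompose f [:0, inverse l:]), inverse l)"

lemma pcompose_lin_lin: "pcompose (pcompose f [:0, a:]) [:0, b:] = pcompose f [:0, a * (b::'k::field):]"
  by (simp add: pcompose_assoc[symmetric] pcompose_pCons)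

lemma gprod_ginv_right: "l \<noteq> 0 \<Longrightarrow> gprod N (f, l) (ginv N f l) = (0, 1)"
proof -
  assume l: "l \<noteq> 0"
  have h: "pcompose (smult (- (inverse l ^ (N - 1))) (pcompose f [:0, inverse l:])) [:0, l:] = smult (- (inverse l ^ (N - 1))) f"
    by (simp only: pcompose_smult pcompose_lin_lin) (simp add: l)
  show ?thesis unfolding gprod_def ginv_def fst_conv snd_conv h using l by simp
qed

lemma gprod_ginv_left: "l \<noteq> 0 \<Longrightarrow> gprod N (ginv N f l) (f, l) = (0, 1)"
proof -
  assume l: "l \<noteq> 0"
  have "smult (l ^ (N - 1)) (smult (- (inverse l ^ (N - 1))) (pcompose f [:0, inverse l:]))
     = - pcompose f [:0, inverse l:]"
    using l by (simp add: power_mult_distrib[symmetric] flip: power_inverse)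
  then show ?thesis using l by (simp add: gprod_def ginv_def)
qed

lemma phi'_alg_aut:
  assumes N: "N \<ge> 1" and l: "l \<noteq> 0"
  shows "is_alg_aut N (phi' N f l)"
  unfolding is_alg_aut_def
proof (intro conjI ballI allI)
  obtain g m where gm: "ginv N f l = (g, m)" by (cases "ginv N f l")
  have bij: "bij_betw (phi' N f l) (A N) (A N)"
  proof (rule bij_betwI)
    show "phi' N f l \<in> A N \<rightarrow> A N" by (simp add: phi'_in2)
    show "phi' N g m \<in> A N \<rightarrow> A N" by (simp add: phi'_in2)
    show "phi' N g m (phi' N f l P) = P" if "P \<in> A N" for P
      using gprod_ginv_left[OF l, of N f] gm by (simp add: phi'_comp[OF N that] phi'_id[OF N that])
    show "phi' N f l (phi' N g m P) = P" if "P \<in> A N" for P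
      using gprod_ginv_right[OF l, of N f] gm by (simp add: phi'_comp[OF N that] phi'_id[OF N that])
  qed
  show "phi' N f l \<in> Bij (A N)"
    using bij by (simp add: Bij_def phi'_def)
  show "phi' N f l (A_add N P Q) = A_add N (phi' N f l P) (phi' N f l Q)" if "P \<in> A N" "Q \<in> A N" for P Q
    using that by (elim A_cases) (simp add: A_add_cls phi'_cls[OF N] ev_add)
  show "phi' N f l (A_mult N P Q) = A_mult N (phi' N f l P) (phi' N f l Q)" if "P \<in> A N" "Q \<in> A N" for P Q
    using that by (elim A_cases) (simp add: A_mult_cls phi'_cls[OF N] ev_mult)
  show "phi' N f l (A_scale N c P) = A_scale N c (phi' N f l P)" if "P \<in> A N" for c P
    using that by (elim A_cases) (simp add: A_scale_cls phi'_cls[OF N] ev_fscal_mult)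
  show "phi' N f l (A_one N) = A_one N"
    by (simp add: A_one_def phi'_cls[OF N])
qed

lemma phi'_is_phi:
  assumes N: "N \<ge> 1" and l: "l \<noteq> 0"
  shows "is_phi N f l (phi' N f l)"
  unfolding is_phi_def
proof (intro conjI)
  show "is_alg_aut N (phi' N f l)" by (rule phi'_alg_aut[OF N l])
  show "phi' N f l (A_x N) = A_scale N l (A_x N)"
    by (simp add: A_x_def phi'_cls[OF N] ev_fx Xv_def A_scale_cls)
  show "phi' N f l (A_y N) = A_add N (A_scale N (l ^ (N - 1)) (A_y N)) (A_poly N f)"
    by (simp add: A_y_def A_poly_def phi'_cls[OF N] ev_fy Yv_def A_scale_cls A_add_cls)
qed

lemma is_phi_unique:
  fixes \<sigma>1 \<sigma>2 :: "'k::field_char_0 free_alg set \<Rightarrow> 'k free_alg set"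
  shows "is_phi N f l \<sigma>1 \<Longrightarrow> is_phi N f l \<sigma>2 \<Longrightarrow> \<sigma>1 = \<sigma>2"
  unfolding is_phi_def by (intro aut_unique) auto

lemma phi_eq:
  assumes N: "N \<ge> 1" and l: "l \<noteq> (0::'k::field_char_0)"
  shows "phi N f l = phi' N f l"
  unfolding phi_def
proof (rule the_equality)
  show "is_phi N f l (phi' N f l)" by (rule phi'_is_phi[OF N l])
  fix \<sigma> assume "is_phi N f l \<sigma>"
  then show "\<sigma> = phi' N f l" by (rule is_phi_unique[OF _ phi'_is_phi[OF N l]])
qed


lemma Nf_phi'_x: "N \<ge> 1 \<Longrightarrow> Nf N (phi' N f l (A_x N)) = [:[:0, l:]:]"
  by (simp add: A_x_def phi'_cls Nf_cls ev_fx Xv_def nf_fscal_mult nf_fx)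

lemma Nf_phi'_y: "N \<ge> 1 \<Longrightarrow> Nf N (phi' N f l (A_y N)) = [:f, [:l ^ (N - 1):]:]"
  by (simp add: A_y_def phi'_cls Nf_cls ev_fy Yv_def nf_fscal_mult nf_fy nf_add nf_fpoly)

theorem proposition2p4:
  fixes N :: nat
  assumes "N \<ge> 1"
  shows "(\<forall>(f :: 'k::field_char_0 poly) (l :: 'k). l \<noteq> 0 \<longrightarrow> (\<exists>!\<phi>. is_phi N f l \<phi>))
    \<and> (\<lambda>(f :: 'k poly, l). phi N f l) \<in> iso (bowtie N) (Aut_group N)"
proof (intro conjI allI impI)
  note N = assms
  fix f :: "'k poly" and l :: 'k
  assume l: "l \<noteq> 0"
  show "\<exists>!\<phi>. is_phi N f l \<phi>"
    by (rule ex1I[of _ "phi' N f l"]) (auto intro: phi'_is_phi[OF N l] is_phi_unique[OF _ phi'_is_phi[OF N l]])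
next
  note N = assms
  let ?h = "\<lambda>(f :: 'k poly, l). phi N f l"
  have cG: "carrier (bowtie N) = {(f :: 'k poly, l). l \<noteq> 0}" by (simp add: bowtie_def)
  have cH: "carrier (Aut_group N) = {\<phi> :: 'k free_alg set \<Rightarrow> 'k free_alg set. is_alg_aut N \<phi>}"
    by (simp add: Aut_group_def BijGroup_def)
  have mG: "(f, l) \<otimes>\<^bsub>bowtie N\<^esub> (g, m) = gprod N (f, l) (g, m)" for f g :: "'k poly" and l m :: 'k
    by (simp add: bowtie_def gprod_def)
  have mH: "a \<otimes>\<^bsub>Aut_group N\<^esub> b = compose (A N) a b" if "a \<in> Bij (A N)" "b \<in> Bij (A N)"
    for a b :: "'k free_alg set \<Rightarrow> 'k free_alg set"
    using that by (simp add: Aut_group_def BijGroup_def)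
  have hval: "?h (f, l) = phi' N f l" if "l \<noteq> 0" for f l using that by (simp add: phi_eq[OF N])
  have hom: "?h \<in> hom (bowtie N) (Aut_group N)"
  proof (rule homI)
    fix x :: "'k poly \<times> 'k" assume "x \<in> carrier (bowtie N)"
    then obtain f l where x: "x = (f, l)" "l \<noteq> 0" by (cases x) (auto simp: bowtie_def)
    then show "?h x \<in> carrier (Aut_group N)" using cH by (simp add: phi_eq[OF N x(2)] phi'_alg_aut[OF N x(2)])
  next
    fix x y :: "'k poly \<times> 'k" assume "x \<in> carrier (bowtie N)" "y \<in> carrier (bowtie N)"
    then obtain f l g m where x: "x = (f, l)" "l \<noteq> 0" and y: "y = (g, m)" "m \<noteq> 0" by (cases x; cases y) (auto simp: bowtie_def)
    have lm: "snd (gprod N (f, l) (g, m)) \<noteq> 0" using x y by (simp add: gprod_def)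
    have b1: "phi' N f l \<in> Bij (A N)" using phi'_alg_aut[OF N x(2)] by (simp add: is_alg_aut_def)
    have b2: "phi' N g m \<in> Bij (A N)" using phi'_alg_aut[OF N y(2)] by (simp add: is_alg_aut_def)
    have "?h (x \<otimes>\<^bsub>bowtie N\<^esub> y) = phi N (fst (gprod N (f, l) (g, m))) (snd (gprod N (f, l) (g, m)))"
      by (simp add: x y mG split_beta)
    also have "\<dots> = phi' N (fst (gprod N (f, l) (g, m))) (snd (gprod N (f, l) (g, m)))"
      by (rule phi_eq[OF N lm])
    also have "\<dots> = compose (A N) (phi' N f l) (phi' N g m)"
    proof
      fix P show "phi' N (fst (gprod N (f, l) (g, m))) (snd (gprod N (f, l) (g, m))) P = compose (A N) (phi' N f l) (phi' N g m) P"
      proof (cases "P \<in> A N")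
        case True then show ?thesis by (simp add: compose_def phi'_comp[OF N])
      next
        case False then show ?thesis by (simp add: compose_def phi'_def)
      qed
    qed
    also have "\<dots> = ?h x \<otimes>\<^bsub>Aut_group N\<^esub> ?h y"
      using b1 b2 by (simp add: x y phi_eq[OF N x(2)] phi_eq[OF N y(2)] mH)
    finally show "?h (x \<otimes>\<^bsub>bowtie N\<^esub> y) = ?h x \<otimes>\<^bsub>Aut_group N\<^esub> ?h y" .
  qed
  have inj: "inj_on ?h (carrier (bowtie N))"
  proof (rule inj_onI)
    fix x y :: "'k poly \<times> 'k" assume "x \<in> carrier (bowtie N)" "y \<in> carrier (bowtie N)" and e: "?h x = ?h y"
    then obtain f l g m where x: "x = (f, l)" "l \<noteq> 0" and y: "y = (g, m)" "m \<noteq> 0" by (cases x; cases y) (auto simp: bowtie_def)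
    have e': "phi' N f l = phi' N g m" using e x y by (simp add: phi_eq[OF N x(2)] phi_eq[OF N y(2)])
    have "[:[:0, l:]:] = [:[:0, m:]:]" using Nf_phi'_x[OF N, of f l] Nf_phi'_x[OF N, of g m] e' by simp
    then have "l = m" by simp
    moreover have "[:f, [:l ^ (N - 1):]:] = [:g, [:m ^ (N - 1):]:]"
      using Nf_phi'_y[OF N, of f l] Nf_phi'_y[OF N, of g m] e' by simp
    then have "f = g" by simp
    ultimately show "x = y" using x y by simp
  qed
  have img: "?h ` carrier (bowtie N) = carrier (Aut_group N)"
  proof
    show "?h ` carrier (bowtie N) \<subseteq> carrier (Aut_group N)"
    proof (rule image_subsetI)
      fix x :: "'k poly \<times> 'k" assume "x \<in> carrier (bowtie N)"
      moreover have "?h \<in> carrier (bowtie N) \<rightarrow> carrier (Aut_group N)" using hom by (simp add: hom_def)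
      ultimately show "?h x \<in> carrier (Aut_group N)" by (rule funcset_mem[rotated])
    qed
    show "carrier (Aut_group N) \<subseteq> ?h ` carrier (bowtie N)"
    proof
      fix \<sigma> :: "'k free_alg set \<Rightarrow> 'k free_alg set" assume "\<sigma> \<in> carrier (Aut_group N)"
      then have s: "is_alg_aut N \<sigma>" using cH by simp
      then obtain f l where l: "l \<noteq> (0::'k)" and p: "is_phi N f l \<sigma>" using aut_is_phi[OF s N] by blast
      have "\<sigma> = phi' N f l" by (rule is_phi_unique[OF p phi'_is_phi[OF N l]])
      then have "\<sigma> = ?h (f, l)" using l by (simp add: phi_eq[OF N l])
      moreover have "(f, l) \<in> carrier (bowtie N)" using cG l by simp
      ultimately show "\<sigma> \<in> ?h ` carrier (bowtie N)" by blast
    qed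
  qed
  show "?h \<in> iso (bowtie N) (Aut_group N)"
    unfolding iso_def using hom inj img by (simp add: bij_betw_def)
qed


end
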